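(* Assume conditions (C1), (C2) and (C3) hold. Then the sequence $\{x_n\}$ generated by Algorithm 3.1 converges weakly to some element of $\Omega$.
   Context: Let $H$ be a real Hilbert space, $A:H\to H$ a single-valued mapping and $B:H\to 2^H$ a set-valued mapping, and let $\Omega:=(A+B)^{-1}(0)=\{x\in H:\ 0\in Ax+Bx\}$. Algorithm 3.1 is the following iteration. Fix $x_0,x_1\in H$, $\mu\in(0,1)$, $\lambda_1>0$, real sequences $\{\alpha_n\},\{\beta_n\},\{\theta_n\}$ and nonnegative real sequences $\{\mu_n\},\{p_n\}$. For $n=1,2,\dots$ compute $w_n=x_n+\alpha_n(x_n-x_{n-1})$, $z_n=x_n+\beta_n(x_n-x_{n-1})$, $y_n=(I+\lambda_nB)^{-1}(I-\lambda_nA)w_n$, and set $\lambda_{n+1}=\min\{(\mu_n+\mu)\|w_n-y_n\|/\|Aw_n-Ay_n\|,\ \lambda_n+p_n\}$ if $Aw_n\neq Ay_n$, and $\lambda_{n+1}=\lambda_n+p_n$ otherwise. If $w_n=y_n$ the algorithm stops (then $y_n\in\Omega$). Otherwise set $x_{n+1}=(1-\theta_n)z_n+\theta_n\big(y_n-\lambda_n(Ay_n-Aw_n)\big)$ and continue. Here $I$ is the identity and $(I+\lambda B)^{-1}$ is the resolvent of $B$. Throughout, it is assumed that the algorithm does not stop, so that infinite sequences $\{x_n\},\{w_n\},\{z_n\},\{y_n\},\{\lambda_n\}$ are generated. Condition (C1): $\Omega\neq\emptyset$. Condition (C2): $A$ is $L$-Lipschitz continuous and monotone, and $B$ is maximal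 monotone. Condition (C3): there is $\varepsilon\in(1,\infty)$ such that (i) $0\le\alpha_n\le1$; (ii) $0\le\beta_n\le\beta_{n+1}\le\beta<\frac{3+2\varepsilon-\sqrt{8\varepsilon+17}}{2\varepsilon}$ for some constant $\beta$; (iii) $0<\theta<\theta_n\le\theta_{n+1}\le\frac{1}{1+\varepsilon}$ for some constant $\theta$; (iv) $a_n:=(1-\theta_n)\beta_n+\theta_n\alpha_n$ is non-decreasing; (v) $\sum_{n=1}^\infty p_n<\infty$ and $\lim_{n\to\infty}\mu_n=0$. *)

theory Defs
  imports "HOL-Analysis.Analysis"
begin

definition weak_conv :: "(nat \<Rightarrow> 'a::real_inner) \<Rightarrow> 'a \<Rightarrow> bool" where
  "weak_conv x p \<longleftrightarrow> (\<forall>v. (\<lambda>n. x n \<bullet> v) \<longlonglongrightarrow> p \<bullet> v)"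

definition monotone_op :: "('a::real_inner \<Rightarrow> 'a) \<Rightarrow> bool" where
  "monotone_op A \<longleftrightarrow> (\<forall>x y. (A x - A y) \<bullet> (x - y) \<ge> 0)"

definition monotone_setop :: "('a::real_inner \<Rightarrow> 'a set) \<Rightarrow> bool" where
  "monotone_setop B \<longleftrightarrow> (\<forall>x y u v. u \<in> B x \<longrightarrow> v \<in> B y \<longrightarrow> (u - v) \<bullet> (x - y) \<ge> 0)"

definition maximal_monotone :: "('a::real_inner \<Rightarrow> 'a set) \<Rightarrow> bool" where
  "maximal_monotone B \<longleftrightarrow> monotone_setop B \<and>
     (\<forall>B'. monotone_setop B' \<and> (\<forall>x. B x \<subseteq> B' x) \<longrightarrow> B' = B)"

text \<open>Resolvent (I + lam B)^{-1} x: the (unique, for maximal monotone B and lam > 0)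
  y with x \<in> y + lam B y.\<close>
definition resolvent :: "('a::real_inner \<Rightarrow> 'a set) \<Rightarrow> real \<Rightarrow> 'a \<Rightarrow> 'a" where
  "resolvent B lam x = (THE y. \<exists>b\<in>B y. x = y + lam *\<^sub>R b)"

definition zeros_sum :: "('a::real_inner \<Rightarrow> 'a) \<Rightarrow> ('a \<Rightarrow> 'a set) \<Rightarrow> 'a set" where
  "zeros_sum A B = {x. \<exists>b\<in>B x. A x + b = 0}"

end

theory Submission
  imports Defs
begin

lemma strongly_convex_min:
  fixes f :: "'a::{real_inner,complete_space} \<Rightarrow> real"
  assumes S: "closed S" "S \<noteq> {}" "\<And>x y. x\<in>S \<Longrightarrow> y\<in>S \<Longrightarrow> (1/2) *\<^sub>R (x+y) \<in> S"
    and cont: "continuous_on S f"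
    and bdd: "\<And>x. x\<in>S \<Longrightarrow> f x \<ge> m0"
    and sc: "\<And>x y. x\<in>S \<Longrightarrow> y\<in>S \<Longrightarrow> f ((1/2) *\<^sub>R (x+y)) \<le> (f x + f y)/2 - c * (norm (x-y))^2"
    and c: "c > 0"
  shows "\<exists>x\<in>S. \<forall>y\<in>S. f x \<le> f y"
proof -
  define m where "m = Inf (f ` S)"
  have bb: "bdd_below (f ` S)" using bdd by (intro bdd_belowI[of _ m0]) auto
  have mle: "\<And>x. x\<in>S \<Longrightarrow> m \<le> f x" unfolding m_def using bb by (simp add: cINF_lower)
  have "\<forall>n. \<exists>x\<in>S. f x < m + 1/(real n+1)"
  proof
    fix n :: nat
    have "Inf (f ` S) < m + 1/(real n+1)" unfolding m_def by simp
    then obtain t where "t \<in> f ` S" "t < m + 1/(real n+1)"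
      using cInf_lessD[of "f ` S"] S(2) by blast
    then show "\<exists>x\<in>S. f x < m + 1/(real n+1)" by blast
  qed
  then obtain xs where xs: "\<And>n. xs n \<in> S" "\<And>n. f (xs n) < m + 1/(real n+1)" by metis
  have key: "c * (norm (xs n - xs k))^2 \<le> (1/(real n+1) + 1/(real k+1))/2" for n k
  proof -
    have "m \<le> f ((1/2) *\<^sub>R (xs n + xs k))" using mle S(3) xs(1) by blast
    also have "\<dots> \<le> (f (xs n) + f (xs k))/2 - c * (norm (xs n - xs k))^2" using sc xs(1) by blast
    finally show ?thesis using xs(2)[of n] xs(2)[of k] by argo
  qed
  have "Cauchy xs"
  proof (rule metric_CauchyI)
    fix e :: real assume e: "e > 0"
    obtain N :: nat where N: "1/(real N+1) < c * e^2"
    proof -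
      have "c * e^2 > 0" using c e by simp
      then obtain N where "inverse (real (Suc N)) < c*e^2" using reals_Archimedean by blast
      then show ?thesis using that[of N] by (simp add: inverse_eq_divide add.commute)
    qed
    show "\<exists>M. \<forall>m\<ge>M. \<forall>n\<ge>M. dist (xs m) (xs n) < e"
    proof (intro exI allI impI)
      fix n k assume nk: "N \<le> n" "N \<le> k"
      have "1/(real n+1) \<le> 1/(real N+1)" using nk by (simp add: frac_le)
      moreover have "1/(real k+1) \<le> 1/(real N+1)" using nk by (simp add: frac_le)
      ultimately have "c * (norm (xs n - xs k))^2 < c * e^2" using key[of n k] N by argo
      then have "(norm (xs n - xs k))^2 < e^2" using c by simp
      then have "norm (xs n - xs k) < e" using e by (simp add: power_less_imp_less_base)
      then show "dist (xs n) (xs k) < e" by (simp add: dist_norm)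
    qed
  qed
  then obtain l where l: "xs \<longlonglongrightarrow> l" using Cauchy_convergent_iff convergent_def by blast
  have lS: "l \<in> S" using S(1) xs(1) l closed_sequentially by blast
  have "(\<lambda>n. f (xs n)) \<longlonglongrightarrow> f l"
    using continuous_on_tendsto_compose[OF cont l lS] xs(1) by simp
  moreover have "(\<lambda>n. f (xs n)) \<longlonglongrightarrow> m"
  proof (rule tendsto_sandwich[of "\<lambda>n. m" _ _ "\<lambda>n. m + 1/(real n+1)"])
    show "\<forall>\<^sub>F n in sequentially. m \<le> f (xs n)" using mle xs(1) by simp
    show "\<forall>\<^sub>F n in sequentially. f (xs n) \<le> m + 1/(real n+1)" using xs(2) by (simp add: less_imp_le)
    show "(\<lambda>n. m) \<longlonglongrightarrow> m" by simp
    have "(\<lambda>n. 1/(real n+1)) \<longlonglongrightarrow> 0" using LIMSEQ_inverse_real_of_nat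
      by (simp add: inverse_eq_divide add.commute)
    then show "(\<lambda>n. m + 1/(real n+1)) \<longlonglongrightarrow> m" using tendsto_add[of "\<lambda>n. m" m sequentially] by fastforce
  qed
  ultimately have "f l = m" using LIMSEQ_unique by blast
  then show ?thesis using lS mle by auto
qed

lemma half_norm_sq:
  fixes x y :: "'a::real_inner"
  shows "(norm ((1/2) *\<^sub>R (x+y)))^2 = ((norm x)^2 + (norm y)^2)/2 - (1/4) * (norm (x-y))^2"
  by (simp add: power2_norm_eq_inner inner_add_left inner_add_right inner_diff_left inner_diff_right inner_commute algebra_simps)

lemma min_norm_point:
  fixes S :: "'a::{real_inner,complete_space} set"
  assumes S: "closed S" "convex S" "S \<noteq> {}"
  shows "\<exists>c\<in>S. \<forall>s\<in>S. inner (s - c) c \<ge> 0"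
proof -
  have mid: "(1/2) *\<^sub>R (x+y) \<in> S" if "x\<in>S" "y\<in>S" for x y
  proof -
    have "(1/2) *\<^sub>R x + (1/2) *\<^sub>R y \<in> S" using convexD[OF S(2) that, of "1/2" "1/2"] by simp
    then show ?thesis by (simp add: scaleR_add_right)
  qed
  obtain c where c: "c \<in> S" "\<And>y. y\<in>S \<Longrightarrow> (norm c)^2 \<le> (norm y)^2"
  proof -
    have "\<exists>x\<in>S. \<forall>y\<in>S. (norm x)^2 \<le> (norm y)^2"
    proof (rule strongly_convex_min[of S _ 0 "1/4"])
      show "continuous_on S (\<lambda>x. (norm x)^2)" by (intro continuous_intros)
      show "\<And>x y. x\<in>S \<Longrightarrow> y\<in>S \<Longrightarrow> (norm ((1/2) *\<^sub>R (x+y)))^2 \<le> ((norm x)^2 + (norm y)^2)/2 - 1/4 * (norm (x-y))^2"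
        by (subst half_norm_sq) simp
    qed (use S mid in auto)
    then show ?thesis using that by blast
  qed
  show ?thesis
  proof (intro bexI[OF _ c(1)] ballI; rule ccontr)
    fix s assume s: "s \<in> S" and neg: "\<not> 0 \<le> inner (s - c) c"
    define d where "d = s - c"
    have dc: "inner d c < 0" using neg d_def by simp
    then have "d \<noteq> 0" by auto
    then have nd: "(norm d)^2 > 0" by simp
    define t where "t = min 1 (- inner d c / (norm d)^2)"
    have t0: "t > 0" using dc nd by (simp add: t_def divide_neg_pos)
    have t1: "t \<le> 1" by (simp add: t_def)
    have tle: "t * (norm d)^2 \<le> - inner d c" using nd
      by (simp add: t_def min_def divide_simps split: if_splits)
    have "c + t *\<^sub>R d = (1 - t) *\<^sub>R c + t *\<^sub>R s" by (simp add: d_def algebra_simps)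
    also have "\<dots> \<in> S" using convexD[OF S(2) c(1) s, of "1-t" t] t0 t1 by simp
    finally have inS: "c + t *\<^sub>R d \<in> S" .
    have "(norm (c + t *\<^sub>R d))^2 = (norm c)^2 + 2*t*inner d c + t * (t * (norm d)^2)"
      by (simp add: power2_norm_eq_inner inner_add_left inner_add_right inner_commute algebra_simps)
    also have "\<dots> \<le> (norm c)^2 + 2*t*inner d c + t * (- inner d c)"
      using tle t0 by (intro add_left_mono mult_left_mono) auto
    also have "\<dots> < (norm c)^2" using t0 dc by (simp add: algebra_simps mult_pos_neg)
    finally show False using c(2)[OF inS] by simp
  qed
qed

lemma cauchy_from_sq:
  fixes d :: "nat \<Rightarrow> 'a::real_normed_vector"
  assumes h: "\<And>k l. k \<le> l \<Longrightarrow> (norm (d l - d k))^2 \<le> 1/(real k+1)"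
  shows "Cauchy d"
proof (rule metric_CauchyI)
  fix e :: real assume e: "e > 0"
  obtain N :: nat where N: "1/(real N+1) < e^2"
  proof -
    have "e^2 > 0" using e by simp
    then obtain N where "inverse (real (Suc N)) < e^2" using reals_Archimedean by blast
    then show ?thesis using that[of N] by (simp add: inverse_eq_divide add.commute)
  qed
  have *: "norm (d l - d k) < e" if "N \<le> k" "k \<le> l" for k l
  proof -
    have "1/(real k+1) \<le> 1/(real N+1)" using that by (simp add: frac_le)
    then have "(norm (d l - d k))^2 < e^2" using h[OF that(2)] N by argo
    then show ?thesis using e by (simp add: power_less_imp_less_base)
  qed
  show "\<exists>M. \<forall>m\<ge>M. \<forall>n\<ge>M. dist (d m) (d n) < e"
  proof (intro exI allI impI)
    fix m n assume "N \<le> m" "N \<le> n"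
    then show "dist (d m) (d n) < e"
    proof (cases "m \<le> n")
      case True
      then show ?thesis using *[of m n] \<open>N \<le> m\<close> by (simp add: dist_norm norm_minus_commute)
    next
      case False
      then show ?thesis using *[of n m] \<open>N \<le> n\<close> by (simp add: dist_norm)
    qed
  qed
qed

lemma tendsto_from_sq:
  fixes e d :: "nat \<Rightarrow> 'a::real_normed_vector"
  assumes h: "\<And>k. (norm (e k - d k))^2 \<le> 1/(real k+1)" and d: "d \<longlonglongrightarrow> l"
  shows "e \<longlonglongrightarrow> l"
proof -
  have i0: "(\<lambda>k. 1/(real k+1)) \<longlonglongrightarrow> 0" using LIMSEQ_inverse_real_of_nat
    by (simp add: inverse_eq_divide add.commute)
  have "(\<lambda>k. sqrt (1/(real k+1))) \<longlonglongrightarrow> sqrt 0"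
    by (rule tendsto_real_sqrt[OF i0])
  then have s0: "(\<lambda>k. sqrt (1/(real k+1))) \<longlonglongrightarrow> 0" by simp
  have le: "norm (e k - d k) \<le> sqrt (1/(real k+1))" for k
    using real_le_rsqrt[OF h[of k]] .
  have "(\<lambda>k. e k - d k) \<longlonglongrightarrow> 0"
  proof (rule Lim_null_comparison[OF _ s0])
    show "\<forall>\<^sub>F k in sequentially. norm (e k - d k) \<le> sqrt (1/(real k+1))"
      using le by (intro always_eventually allI)
  qed
  then have "(\<lambda>k. (e k - d k) + d k) \<longlonglongrightarrow> 0 + l" using d by (rule tendsto_add)
  then show ?thesis by simp
qed

lemma proj_sq_bound:
  fixes c c' :: "'a::real_inner"
  assumes "inner (c' - c) c \<ge> 0"
  shows "(norm (c' - c))^2 \<le> (norm c')^2 - (norm c)^2"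
proof -
  have "(norm c')^2 = (norm (c' - c))^2 + 2 * inner (c' - c) c + (norm c)^2"
    by (simp add: power2_norm_eq_inner inner_diff_left inner_diff_right inner_commute algebra_simps)
  then show ?thesis using assms by linarith
qed

lemma fip_closed_convex:
  fixes K :: "'i \<Rightarrow> 'a::{real_inner,complete_space} set"
  assumes cl: "\<And>i. i\<in>I \<Longrightarrow> closed (K i)" and cv: "\<And>i. i\<in>I \<Longrightarrow> convex (K i)"
    and i0: "i0 \<in> I" "bounded (K i0)"
    and fip: "\<And>J. finite J \<Longrightarrow> J \<subseteq> I \<Longrightarrow> (\<Inter>i\<in>insert i0 J. K i) \<noteq> {}"
  shows "(\<Inter>i\<in>I. K i) \<noteq> {}"
proof -
  define C where "C J = (\<Inter>i\<in>insert i0 J. K i)" for J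
  define FJ where "FJ = {J. finite J \<and> J \<subseteq> I}"
  have Cprops: "closed (C J) \<and> convex (C J) \<and> C J \<noteq> {}" if "J \<in> FJ" for J
  proof -
    have JI: "insert i0 J \<subseteq> I" "finite J" "J \<subseteq> I" using that i0 unfolding FJ_def by auto
    have "closed (C J)" unfolding C_def using JI(1) cl by (intro closed_INT) blast
    moreover have "convex (C J)" unfolding C_def using JI(1) cv by (intro convex_INT) blast
    moreover have "C J \<noteq> {}" unfolding C_def using fip[OF JI(2,3)] .
    ultimately show ?thesis by blast
  qed
  define c where "c J = (SOME x. x \<in> C J \<and> (\<forall>s\<in>C J. inner (s - x) x \<ge> 0))" for J
  have c: "c J \<in> C J \<and> (\<forall>s\<in>C J. inner (s - c J) (c J) \<ge> 0)" if "J \<in> FJ" for J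
  proof -
    have "\<exists>x. x \<in> C J \<and> (\<forall>s\<in>C J. inner (s - x) x \<ge> 0)"
      using min_norm_point[of "C J"] Cprops[OF that] by blast
    then show ?thesis unfolding c_def by (rule someI_ex)
  qed
  obtain R where R: "\<And>x. x \<in> K i0 \<Longrightarrow> norm x \<le> R" using i0(2) bounded_iff by blast
  have cR: "(norm (c J))^2 \<le> R^2" if "J \<in> FJ" for J
  proof -
    have "c J \<in> K i0" using c[OF that] unfolding C_def by auto
    then have "norm (c J) \<le> R" by (rule R)
    then show ?thesis by (simp add: power_mono)
  qed
  have mono: "(norm (c J' - c J))^2 \<le> (norm (c J'))^2 - (norm (c J))^2"
    if "J \<in> FJ" "J' \<in> FJ" "J \<subseteq> J'" for J J'
  proof (rule proj_sq_bound)
    have "C J' \<subseteq> C J" using that(3) unfolding C_def by auto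
    then have "c J' \<in> C J" using c[OF that(2)] by auto
    then show "inner (c J' - c J) (c J) \<ge> 0" using c[OF that(1)] by blast
  qed
  define s where "s = Sup ((\<lambda>J. (norm (c J))^2) ` FJ)"
  have FJne: "{} \<in> FJ" by (simp add: FJ_def)
  have bdd: "bdd_above ((\<lambda>J. (norm (c J))^2) ` FJ)" using cR by (intro bdd_aboveI[of _ "R^2"]) auto
  have les: "(norm (c J))^2 \<le> s" if "J \<in> FJ" for J
    unfolding s_def using bdd that by (rule cSUP_upper2) simp
  have "\<forall>k::nat. \<exists>J\<in>FJ. s - 1/(real k+1) < (norm (c J))^2"
  proof
    fix k :: nat
    have "s - 1/(real k+1) < s" by simp
    then obtain t where "t \<in> (\<lambda>J. (norm (c J))^2) ` FJ" "s - 1/(real k+1) < t"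
      unfolding s_def using less_cSupD[of "(\<lambda>J. (norm (c J))^2) ` FJ"] FJne by blast
    then show "\<exists>J\<in>FJ. s - 1/(real k+1) < (norm (c J))^2" by blast
  qed
  then obtain G where G: "\<And>k. G k \<in> FJ" "\<And>k. s - 1/(real k+1) < (norm (c (G k)))^2" by metis
  define H where "H k = (\<Union>j\<le>k. G j)" for k
  have HF: "H k \<in> FJ" for k using G(1) unfolding H_def FJ_def by auto
  have Hmono: "H k \<subseteq> H l" if "k \<le> l" for k l using that unfolding H_def by (auto intro: le_trans)
  have Hbig: "s - 1/(real k+1) < (norm (c (H k)))^2" for k
  proof -
    have "G k \<subseteq> H k" unfolding H_def by auto
    then have "(norm (c (H k) - c (G k)))^2 \<le> (norm (c (H k)))^2 - (norm (c (G k)))^2" by (rule mono[OF G(1) HF])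
    moreover have "0 \<le> (norm (c (H k) - c (G k)))^2" by simp
    ultimately have "(norm (c (G k)))^2 \<le> (norm (c (H k)))^2" by linarith
    then show ?thesis using G(2)[of k] by linarith
  qed
  have "Cauchy (\<lambda>k. c (H k))"
  proof (rule cauchy_from_sq)
    fix k l :: nat assume "k \<le> l"
    then have "(norm (c (H l) - c (H k)))^2 \<le> (norm (c (H l)))^2 - (norm (c (H k)))^2"
      by (rule mono[OF HF HF Hmono])
    then show "(norm (c (H l) - c (H k)))^2 \<le> 1/(real k+1)" using les[OF HF, of l] Hbig[of k] by argo
  qed
  then obtain d where d: "(\<lambda>k. c (H k)) \<longlonglongrightarrow> d" using Cauchy_convergent_iff convergent_def by blast
  have "d \<in> K i" if iI: "i \<in> I" for i
  proof -
    define E where "E k = insert i (H k)" for k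
    have EF: "E k \<in> FJ" for k using HF iI unfolding E_def FJ_def by auto
    have "(\<lambda>k. c (E k)) \<longlonglongrightarrow> d"
    proof (rule tendsto_from_sq[OF _ d])
      fix k
      have "(norm (c (E k) - c (H k)))^2 \<le> (norm (c (E k)))^2 - (norm (c (H k)))^2"
        by (rule mono[OF HF EF]) (auto simp add: E_def)
      then show "(norm (c (E k) - c (H k)))^2 \<le> 1/(real k+1)" using les[OF EF, of k] Hbig[of k] by argo
    qed
    moreover have "c (E k) \<in> K i" for k using c[OF EF, of k] unfolding C_def E_def by auto
    ultimately show ?thesis using closed_sequentially[OF cl[OF iI], of "\<lambda>k. c (E k)" d] by blast
  qed
  then show ?thesis by blast
qed

lemma weighted_monotone:
  fixes A B :: "'i \<Rightarrow> 'a::real_inner"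
  assumes fin: "finite G" and u: "\<And>g. g\<in>G \<Longrightarrow> u g \<ge> 0" and su: "sum u G = 1"
    and mono: "\<And>g g'. g\<in>G \<Longrightarrow> g'\<in>G \<Longrightarrow> inner (A g - A g') (B g - B g') \<ge> 0"
  shows "inner (\<Sum>g\<in>G. u g *\<^sub>R A g) (\<Sum>g\<in>G. u g *\<^sub>R B g) \<le> (\<Sum>g\<in>G. u g * inner (A g) (B g))"
proof -
  define S where "S = (\<Sum>g\<in>G. u g * inner (A g) (B g))"
  define X where "X = inner (\<Sum>g\<in>G. u g *\<^sub>R A g) (\<Sum>g\<in>G. u g *\<^sub>R B g)"
  have "0 \<le> (\<Sum>g\<in>G. \<Sum>g'\<in>G. u g * u g' * inner (A g - A g') (B g - B g'))"
    using u mono by (intro sum_nonneg mult_nonneg_nonneg) auto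
  also have "\<dots> = (\<Sum>g\<in>G. \<Sum>g'\<in>G. u g * u g' * inner (A g) (B g)) - (\<Sum>g\<in>G. \<Sum>g'\<in>G. u g * u g' * inner (A g) (B g'))
       - (\<Sum>g\<in>G. \<Sum>g'\<in>G. u g * u g' * inner (A g') (B g)) + (\<Sum>g\<in>G. \<Sum>g'\<in>G. u g * u g' * inner (A g') (B g'))"
    by (simp add: inner_diff_left inner_diff_right algebra_simps sum_subtractf sum.distrib)
  also have "(\<Sum>g\<in>G. \<Sum>g'\<in>G. u g * u g' * inner (A g) (B g)) = S"
    by (simp add: S_def sum_distrib_left[symmetric] sum_distrib_right[symmetric] su mult.assoc)
  also have "(\<Sum>g\<in>G. \<Sum>g'\<in>G. u g * u g' * inner (A g') (B g')) = S"
    by (subst sum.swap) (simp add: S_def mult.assoc sum_distrib_right[symmetric] su)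
  also have "(\<Sum>g\<in>G. \<Sum>g'\<in>G. u g * u g' * inner (A g) (B g')) = X"
    by (subst sum.swap) (simp add: X_def inner_sum_left inner_sum_right sum_distrib_left mult.assoc mult.left_commute)
  also have "(\<Sum>g\<in>G. \<Sum>g'\<in>G. u g * u g' * inner (A g') (B g)) = X"
    by (simp add: X_def inner_sum_left inner_sum_right sum_distrib_left mult.assoc)
  finally show ?thesis unfolding S_def[symmetric] X_def[symmetric] by linarith
qed

lemma continuous_on_Max_fin:
  fixes f :: "'i \<Rightarrow> 'a::topological_space \<Rightarrow> real"
  assumes "finite P" "P \<noteq> {}" "\<And>i. i\<in>P \<Longrightarrow> continuous_on S (f i)"
  shows "continuous_on S (\<lambda>x. Max ((\<lambda>i. f i x) ` P))"
  using assms
proof (induction P rule: finite_ne_induct)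
  case (singleton i) then show ?case by simp
next
  case (insert i F)
  have "continuous_on S (\<lambda>x. max (f i x) (Max ((\<lambda>i. f i x) ` F)))"
    using insert by (intro continuous_on_max) auto
  moreover have "Max ((\<lambda>i. f i x) ` insert i F) = max (f i x) (Max ((\<lambda>i. f i x) ` F))" for x
    using insert by simp
  ultimately show ?case by simp
qed

lemma hquad_mid:
  fixes x y a b :: "'a::real_inner"
  shows "inner ((1/2) *\<^sub>R (x+y) + b) ((1/2) *\<^sub>R (x+y) - a)
     = (inner (x + b) (x - a) + inner (y + b) (y - a))/2 - (1/4) * (norm (x-y))^2"
  by (simp add: power2_norm_eq_inner inner_add_left inner_add_right inner_diff_left inner_diff_right inner_commute algebra_simps) argo

lemma hquad_lower:
  fixes x a b :: "'a::real_inner"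
  shows "inner (x + b) (x - a) \<ge> -((norm (b - a))^2/4) - inner b a"
proof -
  have "inner (x + b) (x - a) = (norm (x + (1/2) *\<^sub>R (b - a)))^2 - (norm (b - a))^2/4 - inner b a"
    by (simp add: power2_norm_eq_inner inner_add_left inner_add_right inner_diff_left inner_diff_right inner_commute algebra_simps) argo
  then show ?thesis by simp
qed

lemma hquad_dir:
  fixes x p a b :: "'a::real_inner"
  shows "inner (x - t *\<^sub>R p + b) (x - t *\<^sub>R p - a)
     = inner (x + b) (x - a) - t * inner (2 *\<^sub>R x + b - a) p + t^2 * inner p p"
  by (simp add: power2_norm_eq_inner power2_eq_square inner_add_left inner_add_right inner_diff_left inner_diff_right inner_commute algebra_simps)

lemma finite_minty:
  fixes P :: "('a::{real_inner,complete_space} \<times> 'a) set"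
  assumes fin: "finite P"
    and mono: "\<And>a b a' b'. (a,b)\<in>P \<Longrightarrow> (a',b')\<in>P \<Longrightarrow> inner (a - a') (b - b') \<ge> 0"
  shows "\<exists>x. \<forall>(a,b)\<in>P. inner (x + b) (x - a) \<le> 0"
proof (cases "P = {}")
  case True then show ?thesis by simp
next
  case Pne: False
  define h where "h ab x = inner (x + snd ab) (x - fst ab)" for ab and x :: 'a
  define phi where "phi x = Max ((\<lambda>ab. h ab x) ` P)" for x
  have hle: "h ab x \<le> phi x" if "ab \<in> P" for ab x
    unfolding phi_def using fin that by (intro Max_ge) auto
  have phiin: "\<exists>ab\<in>P. phi x = h ab x" for x
  proof -
    have "phi x \<in> (\<lambda>ab. h ab x) ` P" unfolding phi_def using fin Pne by (intro Max_in) auto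
    then show ?thesis by auto
  qed
  obtain ab0 where ab0: "ab0 \<in> P" using Pne by auto
  have "\<exists>x\<in>UNIV. \<forall>y\<in>UNIV. phi x \<le> phi y"
  proof (rule strongly_convex_min[of UNIV phi "-((norm (snd ab0 - fst ab0))^2/4) - inner (snd ab0) (fst ab0)" "1/4"])
    show "continuous_on UNIV phi" unfolding phi_def h_def using fin Pne
      by (intro continuous_on_Max_fin) (auto intro!: continuous_intros)
    show "phi x \<ge> -((norm (snd ab0 - fst ab0))^2/4) - inner (snd ab0) (fst ab0)" for x
      using hle[OF ab0, of x] hquad_lower[where x=x and a="fst ab0" and b="snd ab0"] unfolding h_def by argo
    show "phi ((1/2) *\<^sub>R (x+y)) \<le> (phi x + phi y)/2 - 1/4 * (norm (x-y))^2" for x y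
    proof -
      obtain ab where ab: "ab \<in> P" "phi ((1/2) *\<^sub>R (x+y)) = h ab ((1/2) *\<^sub>R (x+y))" using phiin by blast
      have "h ab ((1/2) *\<^sub>R (x+y)) = (h ab x + h ab y)/2 - (1/4) * (norm (x-y))^2"
        unfolding h_def by (rule hquad_mid)
      then show ?thesis using ab hle[OF ab(1), of x] hle[OF ab(1), of y] by argo
    qed
  qed auto
  then obtain xs where xs: "\<And>y. phi xs \<le> phi y" by blast
  define m where "m = phi xs"
  define I where "I = {ab\<in>P. h ab xs = m}"
  define g where "g ab = 2 *\<^sub>R xs + snd ab - fst ab" for ab
  define Gm where "Gm = g ` I"
  have finI: "finite I" using fin by (simp add: I_def)
  have finG: "finite Gm" using finI by (simp add: Gm_def)
  have Ine: "I \<noteq> {}" using phiin[of xs] unfolding I_def m_def by force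
  have cG: "closed (convex hull Gm)"
    using finite_imp_compact_convex_hull[OF finG] by (rule compact_imp_closed)
  obtain p where p: "p \<in> convex hull Gm" "\<And>q. q \<in> convex hull Gm \<Longrightarrow> inner (q - p) p \<ge> 0"
    using min_norm_point[OF cG convex_convex_hull] Ine by (auto simp: Gm_def)
  have p0: "p = 0"
  proof (rule ccontr)
    assume pn: "p \<noteq> 0"
    then have pp: "inner p p > 0" by simp
    have ev: "\<forall>\<^sub>F t in at_right 0. h ab (xs - t *\<^sub>R p) < m" if abP: "ab \<in> P" for ab
    proof (cases "ab \<in> I")
      case True
      have gp: "inner (g ab) p \<ge> inner p p"
      proof -
        have "g ab \<in> convex hull Gm" using True by (auto simp: Gm_def intro: hull_inc)
        then have "inner (g ab - p) p \<ge> 0" by (rule p(2))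
        then show ?thesis by (simp add: inner_diff_left)
      qed
      have "\<forall>\<^sub>F t in at_right (0::real). t \<in> {0<..<1}" by (rule eventually_at_right_real) simp
      then show ?thesis
      proof (rule eventually_mono)
        fix t :: real assume t: "t \<in> {0<..<1}"
        have "h ab (xs - t *\<^sub>R p) = h ab xs - t * inner (g ab) p + t^2 * inner p p"
          unfolding h_def g_def by (rule hquad_dir)
        also have "\<dots> \<le> m - t * inner p p + t^2 * inner p p"
          using True gp t by (simp add: I_def mult_left_mono)
        also have "\<dots> < m"
        proof -
          have "t^2 * inner p p < t * inner p p" using t pp by (simp add: power2_eq_square)
          then show ?thesis by simp
        qed
        finally show "h ab (xs - t *\<^sub>R p) < m" .
      qed
    next
      case False
      then have lt: "h ab xs < m" using hle[OF abP, of xs] abP unfolding I_def m_def by auto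
      have "((\<lambda>t. h ab (xs - t *\<^sub>R p)) \<longlongrightarrow> h ab (xs - 0 *\<^sub>R p)) (at_right 0)"
        unfolding h_def by (intro tendsto_intros)
      then have "((\<lambda>t. h ab (xs - t *\<^sub>R p)) \<longlongrightarrow> h ab xs) (at_right 0)" by simp
      then show ?thesis using lt by (rule order_tendstoD(2))
    qed
    have "\<forall>\<^sub>F t in at_right 0. \<forall>ab\<in>P. h ab (xs - t *\<^sub>R p) < m"
      using fin ev by (intro eventually_ball_finite) auto
    then obtain t :: real where t: "\<forall>ab\<in>P. h ab (xs - t *\<^sub>R p) < m"
      using eventually_happens trivial_limit_at_right_real by blast
    obtain ab where "ab \<in> P" "phi (xs - t *\<^sub>R p) = h ab (xs - t *\<^sub>R p)" using phiin by blast
    then have "phi (xs - t *\<^sub>R p) < m" using t by auto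
    then show False using xs[of "xs - t *\<^sub>R p"] unfolding m_def by simp
  qed
  obtain u where u: "\<And>q. q\<in>Gm \<Longrightarrow> 0 \<le> u q" "sum u Gm = 1" "(\<Sum>q\<in>Gm. u q *\<^sub>R q) = 0"
    using p(1) p0 unfolding convex_hull_finite[OF finG] by auto
  define pre where "pre q = inv_into I g q" for q
  have pre: "pre q \<in> I" "g (pre q) = q" if "q \<in> Gm" for q
    using that unfolding pre_def Gm_def by (auto intro: inv_into_into f_inv_into_f)
  define Av where "Av q = fst (pre q)" for q
  define Bv where "Bv q = snd (pre q)" for q
  define Ab where "Ab = (\<Sum>q\<in>Gm. u q *\<^sub>R Av q)"
  define Bb where "Bb = (\<Sum>q\<in>Gm. u q *\<^sub>R Bv q)"
  have preP: "(Av q, Bv q) \<in> P" if "q \<in> Gm" for q using pre(1)[OF that] by (simp add: Av_def Bv_def I_def)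
  have hm: "h (pre q) xs = m" if "q \<in> Gm" for q using pre(1)[OF that] by (simp add: I_def)
  have sumeq: "2 *\<^sub>R xs + Bb - Ab = 0"
  proof -
    have "(\<Sum>q\<in>Gm. u q *\<^sub>R q) = (\<Sum>q\<in>Gm. u q *\<^sub>R (2 *\<^sub>R xs + Bv q - Av q))"
      using pre(2) by (intro sum.cong) (auto simp: g_def Av_def Bv_def)
    also have "\<dots> = (\<Sum>q\<in>Gm. u q) *\<^sub>R (2 *\<^sub>R xs) + Bb - Ab"
      by (simp add: Ab_def Bb_def scaleR_add_right scaleR_diff_right sum.distrib sum_subtractf scaleR_sum_left[symmetric] sum_distrib_right[symmetric])
    finally show ?thesis using u(2,3) by simp
  qed
  have "m = (\<Sum>q\<in>Gm. u q * h (pre q) xs)" using hm u(2)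
    by (simp add: sum_distrib_right[symmetric])
  also have "\<dots> = (\<Sum>q\<in>Gm. u q * (inner xs xs - inner xs (Av q) + inner (Bv q) xs - inner (Bv q) (Av q)))"
    by (intro sum.cong) (simp_all add: h_def Av_def Bv_def inner_add_left inner_diff_right)
  also have "\<dots> = inner xs xs - inner xs Ab + inner Bb xs - (\<Sum>q\<in>Gm. u q * inner (Bv q) (Av q))"
    using u(2) by (simp add: algebra_simps sum.distrib sum_subtractf Ab_def Bb_def inner_sum_left inner_sum_right
        sum_distrib_right[symmetric] sum_distrib_left)
  also have "\<dots> \<le> inner xs xs - inner xs Ab + inner Bb xs - inner Ab Bb"
  proof -
    have "inner Ab Bb \<le> (\<Sum>q\<in>Gm. u q * inner (Av q) (Bv q))"
      unfolding Ab_def Bb_def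
    proof (rule weighted_monotone[OF finG u(1) u(2)])
      fix q g' assume "q \<in> Gm" "g' \<in> Gm"
      then show "0 \<le> inner (Av q - Av g') (Bv q - Bv g')" by (intro mono preP)
    qed
    then show ?thesis by (simp add: inner_commute)
  qed
  also have "\<dots> = - inner (xs + Bb) (xs + Bb)"
  proof -
    have "Ab = 2 *\<^sub>R xs + Bb" using sumeq by (simp add: algebra_simps)
    then show ?thesis by (simp add: inner_add_left inner_add_right inner_commute algebra_simps)
  qed
  also have "\<dots> \<le> 0" by simp
  finally have m0: "m \<le> 0" .
  show ?thesis
  proof (intro exI[of _ xs] ballI)
    fix ab assume "ab \<in> P"
    then have "h ab xs \<le> m" using hle unfolding m_def by blast
    then show "case ab of (a, b) \<Rightarrow> inner (xs + b) (xs - a) \<le> 0" using m0 by (auto simp: h_def)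
  qed
qed

lemma Kball:
  fixes x a b :: "'a::real_inner"
  shows "inner (x + b) (x - a) \<le> 0 \<longleftrightarrow> x \<in> cball ((1/2) *\<^sub>R (a - b)) (norm (a + b) / 2)"
proof -
  have eq: "inner (x + b) (x - a) = (norm (x - (1/2) *\<^sub>R (a - b)))^2 - (norm (a + b) / 2)^2"
    by (simp add: power2_norm_eq_inner power_divide inner_add_left inner_add_right inner_diff_left
        inner_diff_right inner_commute algebra_simps)
  have "(norm (x - (1/2) *\<^sub>R (a - b)))^2 \<le> (norm (a + b) / 2)^2 \<longleftrightarrow> norm (x - (1/2) *\<^sub>R (a - b)) \<le> norm (a + b) / 2"
    using abs_le_square_iff[of "norm (x - (1/2) *\<^sub>R (a - b))" "norm (a + b) / 2"] by simp
  then show ?thesis unfolding eq by (simp add: dist_norm norm_minus_commute)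
qed

lemma monotone_minty:
  fixes P :: "('a::{real_inner,complete_space} \<times> 'a) set"
  assumes mono: "\<And>a b a' b'. (a,b)\<in>P \<Longrightarrow> (a',b')\<in>P \<Longrightarrow> inner (a - a') (b - b') \<ge> 0"
  shows "\<exists>x. \<forall>(a,b)\<in>P. inner (x + b) (x - a) \<le> 0"
proof (cases "P = {}")
  case True then show ?thesis by simp
next
  case False
  then obtain i0 where i0: "i0 \<in> P" by auto
  define K where "K ab = cball ((1/2) *\<^sub>R (fst ab - snd ab)) (norm (fst ab + snd ab) / 2)" for ab :: "'a \<times> 'a"
  have Kiff: "x \<in> K ab \<longleftrightarrow> inner (x + snd ab) (x - fst ab) \<le> 0" for x ab
    unfolding K_def by (rule Kball[symmetric])
  have "(\<Inter>i\<in>P. K i) \<noteq> {}"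
  proof (rule fip_closed_convex[OF _ _ i0])
    show "closed (K i)" "convex (K i)" for i unfolding K_def by auto
    show "bounded (K i0)" unfolding K_def by auto
    fix J assume J: "finite J" "J \<subseteq> P"
    have "\<exists>x. \<forall>(a,b)\<in>insert i0 J. inner (x + b) (x - a) \<le> 0"
      using J i0 by (intro finite_minty) (auto intro: mono)
    then obtain x where x: "\<forall>(a,b)\<in>insert i0 J. inner (x + b) (x - a) \<le> 0" by blast
    have "x \<in> (\<Inter>i\<in>insert i0 J. K i)"
    proof
      fix i assume "i \<in> insert i0 J"
      then show "x \<in> K i" using x unfolding Kiff by (cases i) auto
    qed
    then show "(\<Inter>i\<in>insert i0 J. K i) \<noteq> {}" by blast
  qed
  then obtain x where "\<And>i. i \<in> P \<Longrightarrow> x \<in> K i" by blast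
  then show ?thesis unfolding Kiff by (intro exI[of _ x]) auto
qed

lemma maximal_add_point:
  assumes mx: "maximal_monotone B"
    and h: "\<And>a b. b \<in> B a \<Longrightarrow> inner (u - b) (y - a) \<ge> 0"
  shows "u \<in> B y"
proof -
  define B' where "B' = B(y := insert u (B y))"
  have mB: "monotone_setop B" using mx by (simp add: maximal_monotone_def)
  have "monotone_setop B'"
    unfolding monotone_setop_def
  proof (intro allI impI)
    fix x1 x2 u1 u2 assume u1: "u1 \<in> B' x1" and u2: "u2 \<in> B' x2"
    show "0 \<le> inner (u1 - u2) (x1 - x2)"
    proof (cases "x1 = y \<and> u1 = u")
      case c1: True
      show ?thesis
      proof (cases "x2 = y \<and> u2 = u")
        case True then show ?thesis using c1 by simp
      next
        case False
        then have "u2 \<in> B x2" using u2 by (auto simp: B'_def split: if_splits)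
        then show ?thesis using h c1 by auto
      qed
    next
      case c1: False
      then have b1: "u1 \<in> B x1" using u1 by (auto simp: B'_def split: if_splits)
      show ?thesis
      proof (cases "x2 = y \<and> u2 = u")
        case True
        have "0 \<le> inner (u - u1) (y - x1)" using h b1 by blast
        then have "0 \<le> inner (u1 - u) (x1 - y)"
          by (metis inner_minus_left inner_minus_right minus_diff_eq minus_minus)
        then show ?thesis using True by simp
      next
        case False
        then have "u2 \<in> B x2" using u2 by (auto simp: B'_def split: if_splits)
        then show ?thesis using mB b1 unfolding monotone_setop_def by blast
      qed
    qed
  qed
  moreover have "\<forall>x. B x \<subseteq> B' x" by (auto simp: B'_def)
  ultimately have "B' = B" using mx unfolding maximal_monotone_def by blast
  moreover have "u \<in> B' y" by (simp add: B'_def)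
  ultimately show ?thesis by simp
qed

lemma minty_surj:
  fixes B :: "'a::{real_inner,complete_space} \<Rightarrow> 'a set"
  assumes mx: "maximal_monotone B" and lam: "lam > 0"
  shows "\<exists>y. \<exists>b\<in>B y. f = y + lam *\<^sub>R b"
proof -
  have mB: "monotone_setop B" using mx by (simp add: maximal_monotone_def)
  define P where "P = {(a - f, lam *\<^sub>R b) | a b. b \<in> B a}"
  have "\<exists>x. \<forall>(a,b)\<in>P. inner (x + b) (x - a) \<le> 0"
  proof (rule monotone_minty)
    fix a b a' b' assume "(a,b) \<in> P" "(a',b') \<in> P"
    then obtain a1 b1 a2 b2 where e: "a = a1 - f" "b = lam *\<^sub>R b1" "b1 \<in> B a1"
      "a' = a2 - f" "b' = lam *\<^sub>R b2" "b2 \<in> B a2" unfolding P_def by blast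
    have "0 \<le> inner (b1 - b2) (a1 - a2)" using mB e unfolding monotone_setop_def by blast
    then have "0 \<le> lam * inner (b1 - b2) (a1 - a2)" using lam by simp
    then show "0 \<le> inner (a - a') (b - b')"
      using e by (simp add: inner_commute scaleR_diff_right[symmetric])
  qed
  then obtain x where x: "\<And>a b. b \<in> B a \<Longrightarrow> inner (x + lam *\<^sub>R b) (x - (a - f)) \<le> 0"
    unfolding P_def by blast
  define y where "y = x + f"
  define u where "u = - (1/lam) *\<^sub>R x"
  have "u \<in> B y"
  proof (rule maximal_add_point[OF mx])
    fix a b assume "b \<in> B a"
    then have "inner (x + lam *\<^sub>R b) (x - (a - f)) \<le> 0" by (rule x)
    moreover have "inner (u - b) (y - a) = - (1/lam) * inner (x + lam *\<^sub>R b) (x - (a - f))"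
      using lam by (simp add: u_def y_def inner_add_left inner_diff_left algebra_simps)
    ultimately show "0 \<le> inner (u - b) (y - a)" using lam
      by (simp add: divide_nonpos_pos)
  qed
  moreover have "f = y + lam *\<^sub>R u" using lam by (simp add: y_def u_def)
  ultimately show ?thesis by blast
qed

lemma resolvent_eq:
  fixes B :: "'a::{real_inner,complete_space} \<Rightarrow> 'a set"
  assumes mx: "maximal_monotone B" and lam: "lam > 0"
  shows "\<exists>b\<in>B (resolvent B lam f). f = resolvent B lam f + lam *\<^sub>R b"
proof -
  have mB: "monotone_setop B" using mx by (simp add: maximal_monotone_def)
  have ex: "\<exists>y. \<exists>b\<in>B y. f = y + lam *\<^sub>R b" by (rule minty_surj[OF mx lam])
  have uniq: "y1 = y2" if h1: "\<exists>b\<in>B y1. f = y1 + lam *\<^sub>R b" and h2: "\<exists>b\<in>B y2. f = y2 + lam *\<^sub>R b" for y1 y2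
  proof -
    obtain b1 where b1: "b1 \<in> B y1" "f = y1 + lam *\<^sub>R b1" using h1 by blast
    obtain b2 where b2: "b2 \<in> B y2" "f = y2 + lam *\<^sub>R b2" using h2 by blast
    note b = b1 b2
    have "0 \<le> inner (b1 - b2) (y1 - y2)" using mB b unfolding monotone_setop_def by blast
    moreover have "lam *\<^sub>R (b1 - b2) = - (y1 - y2)" using b by (simp add: algebra_simps)
    then have "lam * inner (b1 - b2) (y1 - y2) = - inner (y1 - y2) (y1 - y2)"
      by (metis inner_minus_left inner_scaleR_left)
    ultimately have "inner (y1 - y2) (y1 - y2) \<le> 0" using lam
      by (metis mult_nonneg_nonneg neg_0_le_iff_le order_less_imp_le)
    then have "inner (y1 - y2) (y1 - y2) = 0" using inner_ge_zero[of "y1 - y2"] by linarith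
    then show ?thesis by simp
  qed
  have "\<exists>!y. \<exists>b\<in>B y. f = y + lam *\<^sub>R b" using ex uniq by blast
  then show ?thesis unfolding resolvent_def by (rule theI')
qed

lemma zero_from_variational:
  fixes A :: "'a::{real_inner,complete_space} \<Rightarrow> 'a"
  assumes mx: "maximal_monotone B" and lip: "\<And>u v. norm (A u - A v) \<le> Lp * norm (u - v)"
    and Lp: "Lp \<ge> 0"
    and h: "\<And>a b. b \<in> B a \<Longrightarrow> inner (A a + b) (a - q) \<ge> 0"
  shows "q \<in> zeros_sum A B"
proof -
  define t where "t = 1 / (Lp + 1)"
  have t: "t > 0" "t * Lp < 1" using Lp by (auto simp: t_def field_simps)
  obtain a b where ab: "b \<in> B a" "q - t *\<^sub>R A q = a + t *\<^sub>R b"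
    using minty_surj[OF mx t(1), of "q - t *\<^sub>R A q"] by blast
  have tb: "t *\<^sub>R b = q - t *\<^sub>R A q - a" using ab(2) by (simp add: algebra_simps)
  have "0 \<le> t * inner (A a + b) (a - q)" using h[OF ab(1)] t by simp
  also have "\<dots> = t * inner (A a - A q) (a - q) + inner (t *\<^sub>R A q + t *\<^sub>R b) (a - q)"
    by (simp add: inner_add_left inner_diff_left algebra_simps)
  also have "t *\<^sub>R A q + t *\<^sub>R b = q - a" using tb by simp
  also have "inner (q - a) (a - q) = -((norm (a - q))^2)"
    by (metis inner_minus_left minus_diff_eq power2_norm_eq_inner)
  finally have i1: "(norm (a - q))^2 \<le> t * inner (A a - A q) (a - q)" by simp
  also have "\<dots> \<le> t * (norm (A a - A q) * norm (a - q))"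
    using t by (intro mult_left_mono) (auto intro: order_trans[OF abs_ge_self] simp: Cauchy_Schwarz_ineq2)
  also have "\<dots> \<le> t * (Lp * norm (a - q) * norm (a - q))"
    using t lip[of a q] by (intro mult_left_mono mult_right_mono) auto
  finally have "(norm (a - q))^2 \<le> (t * Lp) * (norm (a - q))^2" by (simp add: power2_eq_square algebra_simps)
  then have "(1 - t * Lp) * (norm (a - q))^2 \<le> 0" by (simp add: algebra_simps)
  then have "(norm (a - q))^2 \<le> 0" using t(2) by (simp add: mult_le_0_iff)
  then have aq: "a = q" by simp
  then have "t *\<^sub>R b = - (t *\<^sub>R A q)" using tb by simp
  then have "b = - A q" using t(1) by (metis scaleR_cancel_left scaleR_minus_right less_irrefl)
  then show ?thesis using ab(1) aq unfolding zeros_sum_def by (auto intro!: bexI[of _ "- A q"])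
qed

lemma tail_hull_point:
  fixes x :: "nat \<Rightarrow> 'a::{real_inner,complete_space}"
  assumes bx: "bounded (range x)" and S: "infinite S"
  shows "\<exists>q. \<forall>N. q \<in> closure (convex hull (x ` {n\<in>S. N \<le> n}))"
proof -
  define K where "K N = closure (convex hull (x ` {n\<in>S. N \<le> n}))" for N
  have Kmono: "K M \<subseteq> K N" if "N \<le> M" for N M
    unfolding K_def using that by (intro closure_mono hull_mono image_mono) auto
  have Kne: "K N \<noteq> {}" for N
  proof -
    obtain n where "n \<in> S" "N \<le> n" using S infinite_nat_iff_unbounded_le by blast
    then have "x n \<in> K N" unfolding K_def by (auto intro: closure_subset[THEN subsetD] hull_inc)
    then show ?thesis by blast
  qed
  have "(\<Inter>N\<in>UNIV. K N) \<noteq> {}"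
  proof (rule fip_closed_convex[of UNIV K 0])
    show "closed (K i)" "convex (K i)" for i unfolding K_def by auto
    show "bounded (K 0)" unfolding K_def
      by (intro bounded_closure bounded_convex_hull bounded_subset[OF bx]) auto
    fix J :: "nat set" assume J: "finite J" "J \<subseteq> UNIV"
    define M where "M = Max (insert 0 J)"
    have "j \<le> M" if "j \<in> insert 0 J" for j unfolding M_def using J that by simp
    then have "K M \<subseteq> (\<Inter>j\<in>insert 0 J. K j)" using Kmono by blast
    then show "(\<Inter>j\<in>insert 0 J. K j) \<noteq> {}" using Kne[of M] by blast
  qed simp
  then show ?thesis unfolding K_def by blast
qed

lemma hull_halfspace:
  fixes x :: "nat \<Rightarrow> 'a::real_inner"
  assumes ev: "\<And>e. e > 0 \<Longrightarrow> \<exists>N. \<forall>n\<in>S. n \<ge> N \<longrightarrow> inner v (x n) \<le> c + e"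
    and q: "\<forall>N. q \<in> closure (convex hull (x ` {n\<in>S. N \<le> n}))"
  shows "inner v q \<le> c"
proof (rule field_le_epsilon)
  fix e :: real assume e: "e > 0"
  obtain N where N: "\<forall>n\<in>S. n \<ge> N \<longrightarrow> inner v (x n) \<le> c + e" using ev[OF e] by blast
  define H where "H = {z. inner v z \<le> c + e}"
  have "x ` {n\<in>S. N \<le> n} \<subseteq> H" using N by (auto simp: H_def)
  then have "convex hull (x ` {n\<in>S. N \<le> n}) \<subseteq> H"
    by (rule hull_minimal) (simp add: H_def convex_halfspace_le)
  then have "closure (convex hull (x ` {n\<in>S. N \<le> n})) \<subseteq> H"
    by (rule closure_minimal) (simp add: H_def closed_halfspace_le)
  then show "inner v q \<le> c + e" using q by (auto simp: H_def)
qed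

lemma hull_limit_eq:
  fixes x :: "nat \<Rightarrow> 'a::real_inner"
  assumes lim: "(\<lambda>n. inner d (x n)) \<longlonglongrightarrow> c"
    and q: "\<forall>N. q \<in> closure (convex hull (x ` {n\<in>S. N \<le> n}))"
  shows "inner d q = c"
proof -
  have ev: "\<exists>N. \<forall>n\<ge>N. \<bar>inner d (x n) - c\<bar> \<le> e" if e0: "e > 0" for e
  proof -
    obtain N where "\<forall>n\<ge>N. dist (inner d (x n)) c < e" using lim e0 unfolding LIMSEQ_def by blast
    then show ?thesis by (auto simp: dist_real_def intro!: exI[of _ N] less_imp_le)
  qed
  have "inner d q \<le> c"
  proof (rule hull_halfspace[OF _ q])
    fix e :: real assume "e > 0"
    then obtain N where "\<forall>n\<ge>N. \<bar>inner d (x n) - c\<bar> \<le> e" using ev by blast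
    then show "\<exists>N. \<forall>n\<in>S. n \<ge> N \<longrightarrow> inner d (x n) \<le> c + e" by (auto intro!: exI[of _ N])
  qed
  moreover have "inner (-d) q \<le> -c"
  proof (rule hull_halfspace[OF _ q])
    fix e :: real assume "e > 0"
    then obtain N where "\<forall>n\<ge>N. \<bar>inner d (x n) - c\<bar> \<le> e" using ev by blast
    then show "\<exists>N. \<forall>n\<in>S. n \<ge> N \<longrightarrow> inner (-d) (x n) \<le> -c + e" by (auto intro!: exI[of _ N])
  qed
  ultimately show ?thesis by simp
qed

lemma abstract_opial:
  fixes x :: "nat \<Rightarrow> 'a::{real_inner,complete_space}"
  assumes bx: "bounded (range x)"
    and lim: "\<And>p. p \<in> Om \<Longrightarrow> convergent (\<lambda>n. (norm (x n - p))^2)"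
    and dem: "\<And>S q. infinite S \<Longrightarrow> (\<forall>N. q \<in> closure (convex hull (x ` {n\<in>S. N \<le> n}))) \<Longrightarrow> q \<in> Om"
  shows "\<exists>q\<in>Om. weak_conv x q"
proof -
  obtain q0 where q0h: "\<forall>N. q0 \<in> closure (convex hull (x ` {n\<in>UNIV. N \<le> n}))"
    using tail_hull_point[OF bx, of UNIV] by auto
  have q0: "q0 \<in> Om" using dem[OF _ q0h] by simp
  have inner_lim: "(\<lambda>n. inner (q1 - q0) (x n)) \<longlonglongrightarrow> ((lim (\<lambda>n. (norm (x n - q0))^2) - lim (\<lambda>n. (norm (x n - q1))^2)) - (norm q0)^2 + (norm q1)^2) / 2"
    if q1: "q1 \<in> Om" for q1
  proof -
    have l0: "(\<lambda>n. (norm (x n - q0))^2) \<longlonglongrightarrow> lim (\<lambda>n. (norm (x n - q0))^2)"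
      using lim[OF q0] convergent_LIMSEQ_iff by blast
    have l1: "(\<lambda>n. (norm (x n - q1))^2) \<longlonglongrightarrow> lim (\<lambda>n. (norm (x n - q1))^2)"
      using lim[OF q1] convergent_LIMSEQ_iff by blast
    have eq: "inner (q1 - q0) (x n) = (((norm (x n - q0))^2 - (norm (x n - q1))^2) - (norm q0)^2 + (norm q1)^2) / 2" for n
      by (simp add: power2_norm_eq_inner inner_diff_left inner_diff_right inner_commute algebra_simps)
    show ?thesis unfolding eq by (intro tendsto_intros l0 l1) simp
  qed
  have "weak_conv x q0"
    unfolding weak_conv_def
  proof (rule allI, rule ccontr)
    fix v assume nc: "\<not> (\<lambda>n. inner (x n) v) \<longlonglongrightarrow> inner q0 v"
    then obtain e where e: "e > 0" "\<forall>N. \<exists>n\<ge>N. \<bar>inner (x n) v - inner q0 v\<bar> \<ge> e"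
      unfolding LIMSEQ_def dist_real_def by (auto simp: not_less)
    have "\<exists>w. infinite {n. inner (x n - q0) w \<ge> e}"
    proof (rule ccontr)
      assume "\<nexists>w. infinite {n. inner (x n - q0) w \<ge> e}"
      then have f0: "\<forall>w. finite {n. inner (x n - q0) w \<ge> e}" by blast
      have f1: "finite {n. inner (x n - q0) v \<ge> e}" using f0 by blast
      have f2: "finite {n. inner (x n - q0) (-v) \<ge> e}" using spec[OF f0, of "-v"] by blast
      have "{n. \<bar>inner (x n) v - inner q0 v\<bar> \<ge> e} \<subseteq> {n. inner (x n - q0) v \<ge> e} \<union> {n. inner (x n - q0) (-v) \<ge> e}"
        by (auto simp: inner_diff_left abs_if split: if_splits)
      then have "finite {n. \<bar>inner (x n) v - inner q0 v\<bar> \<ge> e}" using f1 f2 by (meson finite_UnI finite_subset)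
      then show False using e(2) infinite_nat_iff_unbounded_le by blast
    qed
    then obtain w where S1: "infinite {n. inner (x n - q0) w \<ge> e}" by blast
    define S where "S = {n. inner (x n - q0) w \<ge> e}"
    obtain q1 where q1h: "\<forall>N. q1 \<in> closure (convex hull (x ` {n\<in>S. N \<le> n}))"
      using tail_hull_point[OF bx, of S] S1 S_def by auto
    have q1: "q1 \<in> Om" using dem[OF _ q1h] S1 S_def by simp
    have "inner (-w) q1 \<le> - inner q0 w - e"
    proof (rule hull_halfspace[OF _ q1h])
      fix e' :: real assume "e' > 0"
      then show "\<exists>N. \<forall>n\<in>S. n \<ge> N \<longrightarrow> inner (-w) (x n) \<le> - inner q0 w - e + e'"
      proof (intro exI[of _ 0] ballI impI)
        fix n assume "n \<in> S"
        then have "e \<le> inner (x n) w - inner q0 w" by (simp add: S_def inner_diff_left)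
        then show "inner (-w) (x n) \<le> - inner q0 w - e + e'" using \<open>e' > 0\<close> by (simp add: inner_commute)
      qed
    qed
    then have gap: "inner (q1 - q0) w \<ge> e" by (simp add: inner_diff_left inner_commute[of w q1])
    have c0: "inner (q1 - q0) q0 = inner (q1 - q0) q1"
      using hull_limit_eq[OF inner_lim[OF q1] q0h] hull_limit_eq[OF inner_lim[OF q1] q1h] by simp
    then have "inner (q1 - q0) (q1 - q0) = 0" by (simp add: inner_diff_right)
    then have "q1 = q0" by simp
    then show False using gap e(1) by simp
  qed
  then show ?thesis using q0 by blast
qed

lemma conv_perturbed:
  fixes v u :: "nat \<Rightarrow> real"
  assumes step: "\<And>n. v (Suc n) \<le> v n + u n" and u0: "\<And>n. u n \<ge> 0" and su: "summable u"
    and lb: "\<And>n. v n \<ge> lb"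
  shows "convergent v"
proof -
  define V where "V n = v n - (\<Sum>k<n. u k)" for n
  have "decseq V" unfolding decseq_Suc_iff V_def using step by (simp add: diff_le_eq add.commute)
  moreover have "\<forall>n. lb - suminf u \<le> V n"
  proof
    fix n
    have "(\<Sum>k<n. u k) \<le> suminf u" using su u0 by (intro sum_le_suminf) auto
    then show "lb - suminf u \<le> V n" using lb[of n] by (simp add: V_def)
  qed
  ultimately obtain L where L: "V \<longlonglongrightarrow> L" using decseq_convergent by blast
  have "(\<lambda>n. \<Sum>k<n. u k) \<longlonglongrightarrow> suminf u" using su by (simp add: summable_LIMSEQ)
  then have "(\<lambda>n. V n + (\<Sum>k<n. u k)) \<longlonglongrightarrow> L + suminf u" using L by (intro tendsto_add)
  then have "v \<longlonglongrightarrow> L + suminf u" by (simp add: V_def)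
  then show ?thesis by (rule convergentI)
qed

lemma nonneg_bounded_summable:
  fixes a :: "nat \<Rightarrow> real"
  assumes "\<And>n. a n \<ge> 0" and "\<And>n. (\<Sum>k<n. a k) \<le> B"
  shows "summable a"
proof (rule bounded_imp_summable[of a B])
  fix n show "(\<Sum>k\<le>n. a k) \<le> B" using assms(2)[of "Suc n"] by (simp add: lessThan_Suc_atMost)
qed (use assms in auto)

lemma inertial_conv:
  fixes phi al e :: "nat \<Rightarrow> real"
  assumes step: "\<And>n. phi (Suc (Suc n)) - phi (Suc n) \<le> al n * (phi (Suc n) - phi n) + e n"
    and al: "\<And>n. 0 \<le> al n" "\<And>n. al n \<le> a" and a: "a < 1"
    and e0: "\<And>n. e n \<ge> 0" and se: "summable e" and lb: "\<And>n. phi n \<ge> 0"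
  shows "convergent phi"
proof -
  define u where "u n = max 0 (phi (Suc n) - phi n)" for n
  have u0: "u n \<ge> 0" for n by (simp add: u_def)
  have ustep: "u (Suc n) \<le> a * u n + e n" for n
  proof -
    have "phi (Suc (Suc n)) - phi (Suc n) \<le> al n * u n + e n"
      using step[of n] al(1)[of n] by (smt (verit) mult_left_mono u_def max.cobounded2)
    also have "\<dots> \<le> a * u n + e n" using al(2)[of n] u0[of n] by (simp add: mult_right_mono)
    finally show ?thesis using e0[of n] al(1)[of n] u0[of n] a al(2)[of n]
      by (simp add: u_def)
  qed
  have bnd: "(\<Sum>k<n. u k) \<le> (u 0 + suminf e) / (1 - a)" for n
  proof (cases n)
    case 0 then show ?thesis using u0[of 0] a se e0 by (simp add: suminf_nonneg)
  next
    case (Suc K)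
    have s1: "(\<Sum>k<Suc K. u k) = u 0 + (\<Sum>k<K. u (Suc k))" by (rule sum.lessThan_Suc_shift)
    have t1: "(\<Sum>k<K. u (Suc k)) \<le> (\<Sum>k<K. a * u k + e k)" by (intro sum_mono ustep)
    have t2: "(\<Sum>k<K. a * u k + e k) = a * (\<Sum>k<K. u k) + (\<Sum>k<K. e k)" by (simp add: sum.distrib sum_distrib_left)
    have t3: "(\<Sum>k<K. e k) \<le> suminf e" using se e0 by (intro sum_le_suminf) auto
    have t4: "(\<Sum>k<K. u k) \<le> (\<Sum>k<Suc K. u k)" using u0 by simp
    have a0: "a \<ge> 0" using al(1)[of 0] al(2)[of 0] by simp
    have t5: "a * (\<Sum>k<K. u k) \<le> a * (\<Sum>k<Suc K. u k)" using t4 a0 by (rule mult_left_mono)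
    have "(\<Sum>k<Suc K. u k) \<le> u 0 + a * (\<Sum>k<Suc K. u k) + suminf e"
      using s1 t1 t2 t3 t5 by linarith
    then have "(1 - a) * (\<Sum>k<Suc K. u k) \<le> u 0 + suminf e" by (simp add: algebra_simps)
    then show ?thesis using a Suc by (simp add: field_simps)
  qed
  have "summable u" by (rule nonneg_bounded_summable[OF u0 bnd])
  moreover have "phi (Suc n) \<le> phi n + u n" for n by (simp add: u_def)
  ultimately show ?thesis using conv_perturbed[of phi u 0] u0 lb by blast
qed

lemma g_pos:
  fixes eps bet :: real
  assumes eps: "eps > 1" and bet: "bet < (3 + 2 * eps - sqrt (8 * eps + 17)) / (2 * eps)"
  shows "eps * (1 + eps) * (1 - bet)^2 - 2 - eps * bet * (1 + bet) > 0" and "bet < 1"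
proof -
  define s where "s = sqrt (8 * eps + 17)"
  have s2: "s^2 = 8 * eps + 17" unfolding s_def by (intro real_sqrt_pow2) (use eps in linarith)
  have s0: "s \<ge> 0" unfolding s_def by (rule real_sqrt_ge_zero) (use eps in linarith)
  define r1 where "r1 = (3 + 2 * eps - s) / (2 * eps)"
  define r2 where "r2 = (3 + 2 * eps + s) / (2 * eps)"
  have br1: "bet < r1" using bet by (simp add: r1_def s_def)
  have r12: "r1 \<le> r2" using s0 eps by (simp add: r1_def r2_def divide_right_mono)
  have fac: "eps * (1 + eps) * (1 - bet)^2 - 2 - eps * bet * (1 + bet) = eps^2 * ((bet - r1) * (bet - r2))"
  proof -
    have "eps^2 * ((bet - r1) * (bet - r2)) = eps^2 * bet^2 - eps^2 * (r1 + r2) * bet + eps^2 * (r1 * r2)"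
      by (simp add: algebra_simps power2_eq_square)
    also have "eps^2 * (r1 + r2) = 2 * eps^2 + 3 * eps" using eps
      by (simp add: r1_def r2_def power2_eq_square field_simps)
    also have "eps^2 * (r1 * r2) = eps^2 + eps - 2"
    proof -
      have "eps^2 * (r1 * r2) = ((3 + 2 * eps)^2 - s^2) / 4" using eps
        by (simp add: r1_def r2_def power2_eq_square field_simps)
      then show ?thesis using s2 by (simp add: power2_eq_square algebra_simps)
    qed
    finally show ?thesis by (simp add: power2_eq_square algebra_simps)
  qed
  have "(bet - r1) * (bet - r2) > 0" using br1 r12 by (intro mult_neg_neg) auto
  then show "eps * (1 + eps) * (1 - bet)^2 - 2 - eps * bet * (1 + bet) > 0" using fac eps by simp
  have "s > 3"
  proof -
    have "s^2 > 3^2" using s2 eps by simp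
    then show ?thesis using s0 by (smt (verit) power_mono)
  qed
  then have "r1 < 1" using eps by (simp add: r1_def field_simps)
  then show "bet < 1" using br1 by simp
qed

lemma c0_bound:
  fixes eps bet b th tt :: real
  assumes eps: "eps > 1" and b: "0 \<le> b" "b \<le> bet" and bet1: "bet < 1"
    and g: "eps * (1 + eps) * (1 - bet)^2 - 2 - eps * bet * (1 + bet) > 0"
    and th: "0 < th" "th \<le> tt" "tt \<le> 1 / (1 + eps)"
  shows "(1 - tt) / tt * (1 - b)^2 - 2 * tt - (1 - tt) * b * (1 + b)
     \<ge> th * (eps * (1 + eps) * (1 - bet)^2 - 2 - eps * bet * (1 + bet))"
proof -
  define g where "g = eps * (1 + eps) * (1 - bet)^2 - 2 - eps * bet * (1 + bet)"
  define r where "r = (1 - tt) / tt"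
  have tt0: "tt > 0" using th by simp
  have "tt * (1 + eps) \<le> 1" using th(3) eps by (simp add: field_simps)
  then have reps: "r \<ge> eps" using tt0 by (simp add: r_def field_simps)
  have ttr: "tt = 1 / (1 + r)" using tt0 by (simp add: r_def field_simps)
  define G where "G r b = r * (1 + r) * (1 - b)^2 - 2 - r * b * (1 + b)" for r b :: real
  have Q: "(1 - tt) / tt * (1 - b)^2 - 2 * tt - (1 - tt) * b * (1 + b) = tt * G r b"
  proof -
    have e1: "tt * r = 1 - tt" using tt0 by (simp add: r_def)
    have e2: "(1 - tt) * (1 + r) = (1 - tt) / tt" using tt0 by (simp add: r_def field_simps)
    have "tt * G r b = (tt * r * (1 + r)) * (1 - b)^2 - 2 * tt - (tt * r) * b * (1 + b)"
      by (simp add: G_def algebra_simps)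
    then show ?thesis unfolding e1 e2 by (simp add: e2)
  qed
  have r0: "r \<ge> 0" using reps eps by simp
  have G1: "G r b \<ge> G r bet"
  proof -
    have "G r b - G r bet = (bet - b) * (r * (1 + r) * (2 - b - bet) + r * (1 + b + bet))"
      by (simp add: G_def algebra_simps power2_eq_square)
    moreover have "r * (1 + r) * (2 - b - bet) + r * (1 + b + bet) \<ge> 0"
      using r0 b bet1 by (intro add_nonneg_nonneg mult_nonneg_nonneg) auto
    ultimately show ?thesis using b by (smt (verit) mult_nonneg_nonneg)
  qed
  have G2: "G r bet \<ge> g"
  proof -
    have "G r bet - g = (r - eps) * ((1 + r + eps) * (1 - bet)^2 - bet * (1 + bet))"
      by (simp add: G_def g_def algebra_simps power2_eq_square)
    moreover have "(1 + r + eps) * (1 - bet)^2 - bet * (1 + bet) \<ge> 0"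
    proof -
      have "eps * ((1 + eps) * (1 - bet)^2) > eps * (bet * (1 + bet))"
        using g bet1 b eps unfolding g_def by (simp add: algebra_simps)
      then have "(1 + eps) * (1 - bet)^2 > bet * (1 + bet)" using eps by simp
      moreover have "(1 + eps) * (1 - bet)^2 \<le> (1 + r + eps) * (1 - bet)^2"
        using r0 by (intro mult_right_mono) auto
      ultimately show ?thesis by simp
    qed
    ultimately show ?thesis using reps by (smt (verit) mult_nonneg_nonneg)
  qed
  have gp: "g > 0" using g by (simp add: g_def)
  have "th * g \<le> tt * g" using th gp by (simp add: mult_right_mono)
  also have "\<dots> \<le> tt * G r b" using G1 G2 tt0 by (simp add: mult_left_mono)
  finally show ?thesis using Q by (simp add: g_def)
qed

lemma tseng_identity:
  fixes y p w ay aw :: "'a::real_inner"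
  shows "(norm ((y - l *\<^sub>R (ay - aw)) - p))^2 = (norm (w - p))^2 - (norm (w - y))^2
    + l^2 * (norm (ay - aw))^2 - 2 * inner (w - y - l *\<^sub>R aw + l *\<^sub>R ay) (y - p)"
  unfolding power2_norm_eq_inner by (simp add: power2_eq_square inner_add_left inner_add_right inner_diff_left
      inner_diff_right inner_commute algebra_simps)

lemma conv_identity:
  fixes Z T :: "'a::real_inner"
  shows "(norm ((1 - t) *\<^sub>R Z + t *\<^sub>R T))^2 = (1 - t) * (norm Z)^2 + t * (norm T)^2 - t * (1 - t) * (norm (Z - T))^2"
  unfolding power2_norm_eq_inner by (simp add: power2_eq_square inner_add_left inner_add_right inner_diff_left
      inner_diff_right inner_commute algebra_simps)

lemma extrap_identity:
  fixes X Y :: "'a::real_inner"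
  shows "(norm ((1 + b) *\<^sub>R X - b *\<^sub>R Y))^2 = (1 + b) * (norm X)^2 - b * (norm Y)^2 + b * (1 + b) * (norm (X - Y))^2"
  unfolding power2_norm_eq_inner by (simp add: power2_eq_square inner_add_left inner_add_right inner_diff_left
      inner_diff_right inner_commute algebra_simps)

lemma young_sub:
  fixes D D' :: "'a::real_inner"
  assumes "0 \<le> b"
  shows "(norm (D' - b *\<^sub>R D))^2 \<ge> (1 - b) * (norm D')^2 - b * (1 - b) * (norm D)^2"
proof -
  have e: "(norm (D' - b *\<^sub>R D))^2 = (norm D')^2 - 2 * b * inner D' D + b^2 * (norm D)^2"
    unfolding power2_norm_eq_inner by (simp add: power2_eq_square inner_diff_left inner_diff_right inner_commute algebra_simps)
  have "2 * inner D' D \<le> (norm D')^2 + (norm D)^2"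
  proof -
    have "0 \<le> (norm (D' - D))^2" by simp
    also have "(norm (D' - D))^2 = (norm D')^2 - 2 * inner D' D + (norm D)^2"
      by (simp add: power2_norm_eq_inner inner_diff_left inner_diff_right inner_commute)
    finally show ?thesis by simp
  qed
  then have "b * (2 * inner D' D) \<le> b * ((norm D')^2 + (norm D)^2)" using assms by (rule mult_left_mono)
  then show ?thesis unfolding e by (simp add: algebra_simps power2_eq_square)
qed

lemma step_ineq:
  fixes X Y T :: "'a::real_inner"
  assumes t: "0 < t" "t < 1" and b: "0 \<le> b"
    and T: "(norm T)^2 \<le> (norm ((1 + a) *\<^sub>R X - a *\<^sub>R Y))^2 - K"
  shows "(norm ((1 - t) *\<^sub>R ((1 + b) *\<^sub>R X - b *\<^sub>R Y) + t *\<^sub>R T))^2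
    \<le> (1 - t) * ((1 + b) * (norm X)^2 - b * (norm Y)^2 + b * (1 + b) * (norm (X - Y))^2)
     + t * ((1 + a) * (norm X)^2 - a * (norm Y)^2 + a * (1 + a) * (norm (X - Y))^2 - K)
     - ((1 - t) / t) * ((1 - b) * (norm ((1 - t) *\<^sub>R ((1 + b) *\<^sub>R X - b *\<^sub>R Y) + t *\<^sub>R T - X))^2
          - b * (1 - b) * (norm (X - Y))^2)"
proof -
  define Z where "Z = (1 + b) *\<^sub>R X - b *\<^sub>R Y"
  define Xn where "Xn = (1 - t) *\<^sub>R Z + t *\<^sub>R T"
  have i1: "(norm Xn)^2 = (1 - t) * (norm Z)^2 + t * (norm T)^2 - t * (1 - t) * (norm (Z - T))^2"
    unfolding Xn_def by (rule conv_identity)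
  have i2: "(norm Z)^2 = (1 + b) * (norm X)^2 - b * (norm Y)^2 + b * (1 + b) * (norm (X - Y))^2"
    unfolding Z_def by (rule extrap_identity)
  have i3: "(norm ((1 + a) *\<^sub>R X - a *\<^sub>R Y))^2 = (1 + a) * (norm X)^2 - a * (norm Y)^2 + a * (1 + a) * (norm (X - Y))^2"
    by (rule extrap_identity)
  have "Xn - Z = t *\<^sub>R (T - Z)" by (simp add: Xn_def algebra_simps)
  then have "(norm (Xn - Z))^2 = t^2 * (norm (Z - T))^2" by (simp add: power_mult_distrib norm_minus_commute)
  then have i4: "t * (1 - t) * (norm (Z - T))^2 = ((1 - t) / t) * (norm (Xn - Z))^2"
    using t by (simp add: power2_eq_square field_simps)
  have "Xn - Z = (Xn - X) - b *\<^sub>R (X - Y)" by (simp add: Z_def algebra_simps)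
  then have i5: "(norm (Xn - Z))^2 \<ge> (1 - b) * (norm (Xn - X))^2 - b * (1 - b) * (norm (X - Y))^2"
    using young_sub[OF b, of "Xn - X" "X - Y"] by metis
  have c0: "(1 - t) / t \<ge> 0" using t by simp
  have i6: "((1 - t) / t) * ((1 - b) * (norm (Xn - X))^2 - b * (1 - b) * (norm (X - Y))^2) \<le> ((1 - t) / t) * (norm (Xn - Z))^2"
    using i5 c0 by (rule mult_left_mono)
  have i7: "t * (norm T)^2 \<le> t * ((norm ((1 + a) *\<^sub>R X - a *\<^sub>R Y))^2 - K)"
    using T t by (intro mult_left_mono) auto
  have j2: "(1 - t) * (norm Z)^2 = (1 - t) * ((1 + b) * (norm X)^2 - b * (norm Y)^2 + b * (1 + b) * (norm (X - Y))^2)"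
    using i2 by simp
  have j3: "t * ((norm ((1 + a) *\<^sub>R X - a *\<^sub>R Y))^2 - K) = t * ((1 + a) * (norm X)^2 - a * (norm Y)^2 + a * (1 + a) * (norm (X - Y))^2 - K)"
    using i3 by simp
  show ?thesis
    unfolding Z_def[symmetric] Xn_def[symmetric]
    using i1 i4 i6 i7 j2 j3 by linarith
qed

locale alg =
  fixes A :: "'a::{real_inner, complete_space} \<Rightarrow> 'a"
    and B :: "'a \<Rightarrow> 'a set"
    and L mu eps bet th :: real
    and alpha beta theta mun p lam :: "nat \<Rightarrow> real"
    and x w z y :: "nat \<Rightarrow> 'a"
  assumes C1: "zeros_sum A B \<noteq> {}"
    and C2_lip: "L-lipschitz_on UNIV A"
    and C2_mono: "monotone_op A"
    and C2_max: "maximal_monotone B"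
    and mu: "0 < mu" "mu < 1"
    and lam1: "lam 1 > 0"
    and mun_nonneg: "\<And>n. n \<ge> 1 \<Longrightarrow> mun n \<ge> 0"
    and p_nonneg: "\<And>n. n \<ge> 1 \<Longrightarrow> p n \<ge> 0"
    and eps: "eps > 1"
    and C3_i: "\<And>n. n \<ge> 1 \<Longrightarrow> 0 \<le> alpha n \<and> alpha n \<le> 1"
    and C3_ii: "\<And>n. n \<ge> 1 \<Longrightarrow> 0 \<le> beta n \<and> beta n \<le> beta (Suc n) \<and> beta (Suc n) \<le> bet"
    and C3_ii_bet: "bet < (3 + 2 * eps - sqrt (8 * eps + 17)) / (2 * eps)"
    and C3_iii: "\<And>n. n \<ge> 1 \<Longrightarrow> 0 < th \<and> th < theta n \<and> theta n \<le> theta (Suc n)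
                      \<and> theta (Suc n) \<le> 1 / (1 + eps)"
    and C3_iv: "\<And>n. n \<ge> 1 \<Longrightarrow>
        (1 - theta n) * beta n + theta n * alpha n
          \<le> (1 - theta (Suc n)) * beta (Suc n) + theta (Suc n) * alpha (Suc n)"
    and C3_v: "summable (\<lambda>n. p (Suc n))" "mun \<longlonglongrightarrow> 0"
    and w_def: "\<And>n. n \<ge> 1 \<Longrightarrow> w n = x n + alpha n *\<^sub>R (x n - x (n - 1))"
    and z_def: "\<And>n. n \<ge> 1 \<Longrightarrow> z n = x n + beta n *\<^sub>R (x n - x (n - 1))"
    and y_def: "\<And>n. n \<ge> 1 \<Longrightarrow> y n = resolvent B (lam n) (w n - lam n *\<^sub>R A (w n))"
    and lam_def: "\<And>n. n \<ge> 1 \<Longrightarrow> lam (Suc n) =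
        (if A (w n) \<noteq> A (y n)
         then min ((mun n + mu) * norm (w n - y n) / norm (A (w n) - A (y n))) (lam n + p n)
         else lam n + p n)"
    and nostop: "\<And>n. n \<ge> 1 \<Longrightarrow> w n \<noteq> y n"
    and x_def: "\<And>n. n \<ge> 1 \<Longrightarrow> x (Suc n) =
        (1 - theta n) *\<^sub>R z n + theta n *\<^sub>R (y n - lam n *\<^sub>R (A (y n) - A (w n)))"
begin

lemma L0: "L \<ge> 0" using C2_lip by (simp add: lipschitz_on_def)

lemma lipA: "norm (A u - A v) \<le> L * norm (u - v)"
  using C2_lip by (simp add: lipschitz_on_def dist_norm)

definition ell where "ell = min (lam 1) (mu / (L + 1))"

lemma ell_pos: "ell > 0" using lam1 mu L0 by (simp add: ell_def)

lemma lam_lower: "n \<ge> 1 \<Longrightarrow> lam n \<ge> ell"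
proof (induct n rule: nat_induct_at_least)
  case base then show ?case by (simp add: ell_def)
next
  case (Suc n)
  have p0: "p n \<ge> 0" using p_nonneg Suc by simp
  show ?case
  proof (cases "A (w n) \<noteq> A (y n)")
    case True
    define nwy where "nwy = norm (w n - y n)"
    define nA where "nA = norm (A (w n) - A (y n))"
    have nA0: "nA > 0" using True by (simp add: nA_def)
    have nwy0: "nwy > 0" using nostop Suc by (simp add: nwy_def)
    have "nA \<le> L * nwy" using lipA[of "w n" "y n"] unfolding nA_def nwy_def .
    then have nAle: "nA \<le> (L + 1) * nwy" using nwy0 by (simp add: algebra_simps)
    have "mu * nwy / ((L + 1) * nwy) \<le> (mun n + mu) * nwy / nA"
      using mun_nonneg[of n] Suc nwy0 nA0 nAle mu by (intro frac_le) (auto intro: mult_right_mono)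
    moreover have "mu * nwy / ((L + 1) * nwy) = mu / (L + 1)" using nwy0 by simp
    ultimately have "ell \<le> (mun n + mu) * nwy / nA" unfolding ell_def by linarith
    moreover have "ell \<le> lam n + p n" using Suc p0 by linarith
    ultimately show ?thesis using lam_def[of n] Suc True by (simp add: nwy_def nA_def)
  next
    case False
    then show ?thesis using lam_def[of n] Suc p0 by simp
  qed
qed

lemma lam_pos: "n \<ge> 1 \<Longrightarrow> lam n > 0" using lam_lower ell_pos by (meson less_le_trans)

lemma lam_up: "n \<ge> 1 \<Longrightarrow> lam (Suc n) \<le> lam n + p n"
  using lam_def[of n] by simp

lemma lam_ratio: "n \<ge> 1 \<Longrightarrow> lam (Suc n) * norm (A (w n) - A (y n)) \<le> (mun n + mu) * norm (w n - y n)"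
proof -
  assume n: "n \<ge> 1"
  show ?thesis
  proof (cases "A (w n) \<noteq> A (y n)")
    case True
    define nA where "nA = norm (A (w n) - A (y n))"
    have nA0: "nA > 0" using True by (simp add: nA_def)
    have "lam (Suc n) \<le> (mun n + mu) * norm (w n - y n) / nA" using lam_def[of n] n True by (simp add: nA_def)
    then have "lam (Suc n) * nA \<le> (mun n + mu) * norm (w n - y n)" using nA0 by (simp add: pos_le_divide_eq)
    then show ?thesis by (simp add: nA_def)
  next
    case False
    then show ?thesis using mun_nonneg[OF n] mu by simp
  qed
qed

lemma lam_conv: "\<exists>ls. ls \<ge> ell \<and> lam \<longlonglongrightarrow> ls"
proof -
  have "convergent (\<lambda>k. lam (Suc k))"
  proof (rule conv_perturbed[of _ "\<lambda>k. p (Suc k)" ell])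
    show "lam (Suc (Suc k)) \<le> lam (Suc k) + p (Suc k)" for k using lam_up[of "Suc k"] by simp
    show "p (Suc k) \<ge> 0" for k using p_nonneg[of "Suc k"] by simp
    show "summable (\<lambda>k. p (Suc k))" by (rule C3_v(1))
    show "lam (Suc k) \<ge> ell" for k using lam_lower[of "Suc k"] by simp
  qed
  then obtain ls where ls: "(\<lambda>k. lam (Suc k)) \<longlonglongrightarrow> ls" by (auto simp: convergent_def)
  have "ell \<le> ls" using ls by (rule LIMSEQ_le_const) (use lam_lower in auto)
  moreover have "lam \<longlonglongrightarrow> ls" using ls by (rule LIMSEQ_imp_Suc)
  ultimately show ?thesis by blast
qed

definition kap where "kap = (1 - mu^2) / 2"

lemma kap_pos: "kap > 0"
proof -
  have "mu^2 < 1" using mu by (simp add: power_less_one_iff abs_if)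
  then show ?thesis by (simp add: kap_def)
qed

lemma kappa_eventually:
  "\<exists>N0\<ge>1. \<forall>n\<ge>N0. (lam n)^2 * (norm (A (y n) - A (w n)))^2 \<le> (1 - kap) * (norm (w n - y n))^2"
proof -
  obtain ls where ls: "ls \<ge> ell" "lam \<longlonglongrightarrow> ls" using lam_conv by blast
  have ls0: "ls > 0" using ls(1) ell_pos by simp
  define rho where "rho n = lam n * (mun n + mu) / lam (Suc n)" for n
  have "rho \<longlonglongrightarrow> ls * (0 + mu) / ls" unfolding rho_def
    by (intro tendsto_intros ls(2) C3_v(2) LIMSEQ_Suc) (use ls0 in simp)
  then have "(\<lambda>n. (rho n)^2) \<longlonglongrightarrow> mu^2" using ls0 by (simp add: tendsto_power)
  moreover have "mu^2 < 1 - kap" using kap_pos unfolding kap_def by argo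
  ultimately have "\<forall>\<^sub>F n in sequentially. (rho n)^2 < 1 - kap" by (rule order_tendstoD(2))
  then obtain N where N: "\<And>n. n \<ge> N \<Longrightarrow> (rho n)^2 < 1 - kap" by (auto simp: eventually_sequentially)
  show ?thesis
  proof (intro exI[of _ "max N 1"] conjI allI impI)
    fix n assume n: "max N 1 \<le> n"
    then have n1: "n \<ge> 1" and nN: "n \<ge> N" by auto
    have lp: "lam n > 0" "lam (Suc n) > 0" using lam_pos n1 by auto
    have "lam (Suc n) * norm (A (w n) - A (y n)) \<le> (mun n + mu) * norm (w n - y n)" by (rule lam_ratio[OF n1])
    then have "norm (A (w n) - A (y n)) \<le> (mun n + mu) * norm (w n - y n) / lam (Suc n)"
      using lp by (simp add: field_simps)
    then have "lam n * norm (A (w n) - A (y n)) \<le> lam n * ((mun n + mu) * norm (w n - y n) / lam (Suc n))"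
      using lp(1) by (rule mult_left_mono[OF _ less_imp_le])
    also have "\<dots> = rho n * norm (w n - y n)" by (simp add: rho_def)
    finally have le: "lam n * norm (A (y n) - A (w n)) \<le> rho n * norm (w n - y n)" by (simp add: norm_minus_commute)
    have "(lam n * norm (A (y n) - A (w n)))^2 \<le> (rho n * norm (w n - y n))^2"
      using le lp by (intro power_mono) auto
    also have "\<dots> = (rho n)^2 * (norm (w n - y n))^2" by (simp add: power_mult_distrib)
    also have "\<dots> \<le> (1 - kap) * (norm (w n - y n))^2" using N[OF nN] by (intro mult_right_mono) auto
    finally show "(lam n)^2 * (norm (A (y n) - A (w n)))^2 \<le> (1 - kap) * (norm (w n - y n))^2"
      by (simp add: power_mult_distrib)
  qed simp
qed

lemma y_res: "n \<ge> 1 \<Longrightarrow> \<exists>b\<in>B (y n). w n - lam n *\<^sub>R A (w n) = y n + lam n *\<^sub>R b"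
  using resolvent_eq[OF C2_max lam_pos] y_def by metis

lemma tseng:
  assumes pt: "pt \<in> zeros_sum A B" and n: "n \<ge> 1"
  shows "(norm ((y n - lam n *\<^sub>R (A (y n) - A (w n))) - pt))^2 \<le> (norm (w n - pt))^2 - (norm (w n - y n))^2
    + (lam n)^2 * (norm (A (y n) - A (w n)))^2"
proof -
  obtain b where b: "b \<in> B (y n)" "w n - lam n *\<^sub>R A (w n) = y n + lam n *\<^sub>R b" using y_res[OF n] by blast
  obtain bp where bp: "bp \<in> B pt" "A pt + bp = 0" using pt unfolding zeros_sum_def by blast
  have mB: "inner (b - bp) (y n - pt) \<ge> 0" using C2_max b(1) bp(1)
    unfolding maximal_monotone_def monotone_setop_def by blast
  have mA: "inner (A (y n) - A pt) (y n - pt) \<ge> 0" using C2_mono unfolding monotone_op_def by blast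
  have "inner (b + A (y n)) (y n - pt) = inner (b - bp) (y n - pt) + inner (A (y n) - A pt) (y n - pt)"
    using bp(2) by (simp add: inner_diff_left inner_add_left algebra_simps eq_neg_iff_add_eq_0[symmetric])
  then have pos: "inner (b + A (y n)) (y n - pt) \<ge> 0" using mA mB by simp
  have "w n - y n - lam n *\<^sub>R A (w n) + lam n *\<^sub>R A (y n) = lam n *\<^sub>R (b + A (y n))"
    using b(2) by (simp add: algebra_simps)
  then have "inner (w n - y n - lam n *\<^sub>R A (w n) + lam n *\<^sub>R A (y n)) (y n - pt) \<ge> 0"
    using pos lam_pos[OF n] by simp
  then show ?thesis using tseng_identity[of "y n" "lam n" "A (y n)" "A (w n)" pt "w n"] by linarith
qed

end

context alg begin

definition tn where "tn n = y n - lam n *\<^sub>R (A (y n) - A (w n))"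
definition phi where "phi pt n = (norm (x n - pt))^2"
definition dd where "dd n = (norm (x n - x (n - 1)))^2"
definition SS where "SS n = (norm (w n - y n))^2"
definition aa where "aa n = (1 - theta n) * beta n + theta n * alpha n"
definition rr where "rr n = (1 - theta n) / theta n"
definition EE where "EE n = (1 - theta n) * beta n * (1 + beta n) + 2 * theta n + rr n * beta n * (1 - beta n)"
definition FF where "FF n = rr n * (1 - beta n)"
definition gg where "gg = eps * (1 + eps) * (1 - bet)^2 - 2 - eps * bet * (1 + bet)"
definition c0 where "c0 = th * gg"

lemma gg_pos: "gg > 0" and bet1: "bet < 1"
  using g_pos[OF eps C3_ii_bet] by (simp_all add: gg_def)

lemma th_pos: "th > 0" using C3_iii[of 1] by simp

lemma c0_pos: "c0 > 0" using gg_pos th_pos by (simp add: c0_def)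

lemma theta_b: assumes "n \<ge> 1" shows "th < theta n" "theta n \<le> 1 / (1 + eps)" "0 < theta n" "theta n < 1/2"
proof -
  show "th < theta n" using C3_iii[OF assms] by simp
  show t2: "theta n \<le> 1 / (1 + eps)" using C3_iii[OF assms] by simp
  show "0 < theta n" using C3_iii[OF assms] by simp
  have "1 / (1 + eps) < 1/2" using eps by (simp add: field_simps)
  then show "theta n < 1/2" using t2 by simp
qed

lemma beta_b: assumes "n \<ge> 1" shows "0 \<le> beta n" "beta n \<le> bet" "beta n < 1"
  using C3_ii[OF assms] bet1 by auto

lemma alpha_b: assumes "n \<ge> 1" shows "0 \<le> alpha n" "alpha n \<le> 1"
  using C3_i[OF assms] by auto

definition N0 where "N0 = (SOME N. N \<ge> 1 \<and> (\<forall>n\<ge>N. (lam n)^2 * (norm (A (y n) - A (w n)))^2 \<le> (1 - kap) * (norm (w n - y n))^2))"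

lemma N0: "N0 \<ge> 1" "\<And>n. n \<ge> N0 \<Longrightarrow> (lam n)^2 * (norm (A (y n) - A (w n)))^2 \<le> (1 - kap) * (norm (w n - y n))^2"
proof -
  have "\<exists>N. N \<ge> 1 \<and> (\<forall>n\<ge>N. (lam n)^2 * (norm (A (y n) - A (w n)))^2 \<le> (1 - kap) * (norm (w n - y n))^2)"
    using kappa_eventually by blast
  then have "N0 \<ge> 1 \<and> (\<forall>n\<ge>N0. (lam n)^2 * (norm (A (y n) - A (w n)))^2 \<le> (1 - kap) * (norm (w n - y n))^2)"
    unfolding N0_def by (rule someI_ex)
  then show "N0 \<ge> 1" "\<And>n. n \<ge> N0 \<Longrightarrow> (lam n)^2 * (norm (A (y n) - A (w n)))^2 \<le> (1 - kap) * (norm (w n - y n))^2"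
    by auto
qed

lemma tn_bound:
  assumes pt: "pt \<in> zeros_sum A B" and n: "n \<ge> N0"
  shows "(norm (tn n - pt))^2 \<le> (norm (w n - pt))^2 - kap * SS n"
proof -
  have n1: "n \<ge> 1" using n N0(1) by simp
  note t1 = tseng[OF pt n1]
  note k = N0(2)[OF n]
  have e: "(1 - kap) * (norm (w n - y n))^2 = (norm (w n - y n))^2 - kap * (norm (w n - y n))^2"
    by (simp add: algebra_simps)
  show ?thesis using t1 k e unfolding tn_def SS_def by linarith
qed

lemma one_step:
  assumes pt: "pt \<in> zeros_sum A B" and n: "n \<ge> N0"
  shows "phi pt (Suc n) \<le> (1 - theta n) * ((1 + beta n) * phi pt n - beta n * phi pt (n - 1) + beta n * (1 + beta n) * dd n)
     + theta n * ((1 + alpha n) * phi pt n - alpha n * phi pt (n - 1) + alpha n * (1 + alpha n) * dd n - kap * SS n)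
     - rr n * ((1 - beta n) * dd (Suc n) - beta n * (1 - beta n) * dd n)"
proof -
  have n1: "n \<ge> 1" using n N0 by simp
  define X where "X = x n - pt"
  define Y where "Y = x (n - 1) - pt"
  define T where "T = tn n - pt"
  have wX: "(1 + alpha n) *\<^sub>R X - alpha n *\<^sub>R Y = w n - pt"
    using w_def[OF n1] by (simp add: X_def Y_def algebra_simps)
  have xX: "(1 - theta n) *\<^sub>R ((1 + beta n) *\<^sub>R X - beta n *\<^sub>R Y) + theta n *\<^sub>R T = x (Suc n) - pt"
    using x_def[OF n1] z_def[OF n1] by (simp add: X_def Y_def T_def tn_def algebra_simps)
  have Tb: "(norm T)^2 \<le> (norm ((1 + alpha n) *\<^sub>R X - alpha n *\<^sub>R Y))^2 - kap * SS n"
    unfolding wX T_def by (rule tn_bound[OF pt n])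
  have th: "0 < theta n" "theta n < 1" using theta_b[OF n1] by auto
  note si = step_ineq[OF th beta_b(1)[OF n1] Tb]
  have e1: "x (Suc n) - pt - X = x (Suc n) - x n" by (simp add: X_def)
  have e2: "X - Y = x n - x (n - 1)" by (simp add: X_def Y_def)
  show ?thesis using si unfolding xX e1 e2 unfolding X_def Y_def
    by (simp add: phi_def dd_def rr_def)
qed

lemma main_ineq:
  assumes pt: "pt \<in> zeros_sum A B" and n: "n \<ge> N0"
  shows "phi pt (Suc n) - phi pt n - aa n * (phi pt n - phi pt (n - 1))
     \<le> EE n * dd n - FF n * dd (Suc n) - theta n * kap * SS n"
proof -
  have n1: "n \<ge> 1" using n N0 by simp
  note os = one_step[OF pt n]
  have ddn: "dd n \<ge> 0" by (simp add: dd_def)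
  have aterm: "theta n * (alpha n * (1 + alpha n) * dd n) \<le> theta n * (2 * dd n)"
  proof -
    have "alpha n * (1 + alpha n) \<le> 1 * 2" using alpha_b[OF n1] by (intro mult_mono) auto
    then have "alpha n * (1 + alpha n) \<le> 2" by simp
    then have "alpha n * (1 + alpha n) * dd n \<le> 2 * dd n" using ddn by (rule mult_right_mono)
    then show ?thesis using theta_b(3)[OF n1] by (intro mult_left_mono) auto
  qed
  have eq: "(1 - theta n) * ((1 + beta n) * phi pt n - beta n * phi pt (n - 1) + beta n * (1 + beta n) * dd n)
     + theta n * ((1 + alpha n) * phi pt n - alpha n * phi pt (n - 1) + alpha n * (1 + alpha n) * dd n - kap * SS n)
     - rr n * ((1 - beta n) * dd (Suc n) - beta n * (1 - beta n) * dd n)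
     = phi pt n + aa n * (phi pt n - phi pt (n - 1)) + ((1 - theta n) * beta n * (1 + beta n) + rr n * beta n * (1 - beta n)) * dd n
       + theta n * (alpha n * (1 + alpha n) * dd n) - FF n * dd (Suc n) - theta n * kap * SS n"
    by (simp add: aa_def FF_def algebra_simps)
  have eq2: "EE n * dd n = ((1 - theta n) * beta n * (1 + beta n) + rr n * beta n * (1 - beta n)) * dd n + theta n * (2 * dd n)"
    by (simp add: EE_def algebra_simps)
  show ?thesis using os eq eq2 aterm by linarith
qed

end

context alg begin

definition N1 where "N1 = N0 + 1"
definition Gam where "Gam pt n = phi pt n - aa n * phi pt (n - 1) + FF (n - 1) * dd n"
definition abar where "abar = (1 + bet) / 2"

lemma abar_lt: "abar < 1" using bet1 by (simp add: abar_def)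

lemma bet0: "bet \<ge> 0" using beta_b[of 1] by simp

lemma abar0: "abar \<ge> 0" using bet0 by (simp add: abar_def)

lemma aa_b: assumes "n \<ge> 1" shows "0 \<le> aa n" "aa n \<le> abar"
proof -
  note t = theta_b[OF assms] and b = beta_b[OF assms] and a = alpha_b[OF assms]
  show "0 \<le> aa n" unfolding aa_def using t b a by (intro add_nonneg_nonneg mult_nonneg_nonneg) auto
  have "(1 - theta n) * beta n \<le> (1 - theta n) * bet" using t b by (intro mult_left_mono) auto
  moreover have "theta n * alpha n \<le> theta n * 1" using t a by (intro mult_left_mono) auto
  moreover have "(1 - theta n) * bet + theta n \<le> abar"
  proof -
    have "theta n * (1 - bet) \<le> (1/2) * (1 - bet)" using t bet1 by (intro mult_right_mono) auto
    then show ?thesis by (simp add: abar_def algebra_simps)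
  qed
  ultimately show "aa n \<le> abar" unfolding aa_def by linarith
qed

lemma aa_mono: "n \<ge> 1 \<Longrightarrow> aa n \<le> aa (Suc n)" using C3_iv by (simp add: aa_def)

lemma rr_nonneg: "n \<ge> 1 \<Longrightarrow> rr n \<ge> 0" using theta_b[of n] by (simp add: rr_def)

lemma FF_nonneg: "n \<ge> 1 \<Longrightarrow> FF n \<ge> 0" using rr_nonneg[of n] beta_b[of n] by (simp add: FF_def)

lemma dd_nonneg: "dd n \<ge> 0" by (simp add: dd_def)
lemma SS_nonneg: "SS n \<ge> 0" by (simp add: SS_def)
lemma phi_nonneg: "phi pt n \<ge> 0" by (simp add: phi_def)

lemma FF_EE: assumes n: "n \<ge> 2" shows "FF (n - 1) - EE n \<ge> c0"
proof -
  define m where "m = n - 1"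
  have m1: "m \<ge> 1" and nm: "n = Suc m" using n by (auto simp: m_def)
  have n1: "n \<ge> 1" using n by simp
  have tm: "theta m \<le> theta n" using C3_iii[OF m1] nm by simp
  have bm: "beta m \<le> beta n" using C3_ii[OF m1] nm by simp
  note tbn = theta_b[OF n1] and tbm = theta_b[OF m1] and bbn = beta_b[OF n1]
  have rrm: "rr m \<ge> rr n"
  proof -
    have "1 / theta n \<le> 1 / theta m" using tm tbm by (intro divide_left_mono) auto
    then show ?thesis using tbn tbm by (simp add: rr_def diff_divide_distrib)
  qed
  have "FF m \<ge> rr n * (1 - beta n)"
    unfolding FF_def using rrm bm bbn rr_nonneg[OF n1] by (intro mult_mono) auto
  moreover have "rr n * (1 - beta n)^2 - 2 * theta n - (1 - theta n) * beta n * (1 + beta n) \<ge> c0"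
    using c0_bound[OF eps bbn(1) bbn(2) bet1 gg_pos[unfolded gg_def] th_pos less_imp_le[OF tbn(1)] tbn(2)]
    by (simp add: rr_def c0_def gg_def)
  moreover have "rr n * (1 - beta n) - EE n = rr n * (1 - beta n)^2 - 2 * theta n - (1 - theta n) * beta n * (1 + beta n)"
    by (simp add: EE_def power2_eq_square algebra_simps)
  ultimately show ?thesis unfolding m_def[symmetric] by linarith
qed

lemma lyap:
  assumes pt: "pt \<in> zeros_sum A B" and n: "n \<ge> N1"
  shows "Gam pt (Suc n) \<le> Gam pt n - c0 * dd n - th * kap * SS n"
proof -
  have nN0: "n \<ge> N0" and n2: "n \<ge> 2" and n1: "n \<ge> 1" using n N0(1) by (auto simp: N1_def)
  note mi = main_ineq[OF pt nN0]
  have am: "aa n * phi pt n \<le> aa (Suc n) * phi pt n"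
    using aa_mono[OF n1] phi_nonneg by (rule mult_right_mono)
  have fe: "c0 * dd n \<le> (FF (n - 1) - EE n) * dd n" using FF_EE[OF n2] dd_nonneg by (rule mult_right_mono)
  have tk: "th * kap * SS n \<le> theta n * kap * SS n"
    using theta_b(1)[OF n1] kap_pos SS_nonneg by (intro mult_right_mono) auto
  have e1: "aa n * (phi pt n - phi pt (n - 1)) = aa n * phi pt n - aa n * phi pt (n - 1)" by (simp add: algebra_simps)
  have e2: "(FF (n - 1) - EE n) * dd n = FF (n - 1) * dd n - EE n * dd n" by (simp add: algebra_simps)
  show ?thesis using mi am fe tk e1 e2 unfolding Gam_def by simp
qed

lemma Gam_dec: assumes pt: "pt \<in> zeros_sum A B" shows "n \<ge> N1 \<Longrightarrow> Gam pt n \<le> Gam pt N1"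
proof (induct n rule: nat_induct_at_least)
  case base then show ?case by simp
next
  case (Suc n)
  have "Gam pt (Suc n) \<le> Gam pt n - c0 * dd n - th * kap * SS n" by (rule lyap[OF pt Suc(1)])
  moreover have "c0 * dd n \<ge> 0" using c0_pos dd_nonneg by simp
  moreover have "th * kap * SS n \<ge> 0" using th_pos kap_pos SS_nonneg by simp
  ultimately show ?case using Suc(2) by linarith
qed

lemma Gam_lower: assumes "n \<ge> 2" shows "Gam pt n \<ge> - (aa n * phi pt (n - 1))"
proof -
  have "FF (n - 1) * dd n \<ge> 0" using FF_nonneg[of "n - 1"] assms dd_nonneg by simp
  then show ?thesis using phi_nonneg[of pt n] unfolding Gam_def by linarith
qed

definition Mb where "Mb pt = max (phi pt N0) (max 0 (Gam pt N1 / (1 - abar)))"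

lemma phi_bound: assumes pt: "pt \<in> zeros_sum A B" shows "n \<ge> N0 \<Longrightarrow> phi pt n \<le> Mb pt"
proof (induct n rule: nat_induct_at_least)
  case base then show ?case by (simp add: Mb_def)
next
  case (Suc n)
  have sn: "Suc n \<ge> N1" "Suc n \<ge> 2" "Suc n \<ge> 1" using Suc(1) N0(1) by (auto simp: N1_def)
  have M0: "Mb pt \<ge> 0" by (simp add: Mb_def)
  have "phi pt (Suc n) \<le> Gam pt (Suc n) + aa (Suc n) * phi pt n"
    using FF_nonneg[of n] Suc(1) N0(1) dd_nonneg[of "Suc n"] unfolding Gam_def
    by (simp add: mult_nonneg_nonneg)
  also have "\<dots> \<le> Gam pt N1 + abar * Mb pt"
  proof -
    have "aa (Suc n) * phi pt n \<le> abar * Mb pt"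
      using aa_b[OF sn(3)] Suc(2) phi_nonneg by (intro mult_mono) auto
    then show ?thesis using Gam_dec[OF pt sn(1)] by linarith
  qed
  also have "\<dots> \<le> Mb pt"
  proof -
    have "Gam pt N1 / (1 - abar) \<le> Mb pt" by (simp add: Mb_def)
    then have "Gam pt N1 \<le> (1 - abar) * Mb pt" using abar_lt by (simp add: field_simps)
    then show ?thesis by (simp add: algebra_simps)
  qed
  finally show ?case .
qed

lemma sum_bound:
  assumes pt: "pt \<in> zeros_sum A B"
  shows "(\<Sum>j<k. c0 * dd (N1 + j) + th * kap * SS (N1 + j)) \<le> Gam pt N1 + abar * Mb pt"
proof -
  have tel: "Gam pt (N1 + k) + (\<Sum>j<k. c0 * dd (N1 + j) + th * kap * SS (N1 + j)) \<le> Gam pt N1" for k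
  proof (induct k)
    case 0 then show ?case by simp
  next
    case (Suc k)
    have "Gam pt (Suc (N1 + k)) \<le> Gam pt (N1 + k) - c0 * dd (N1 + k) - th * kap * SS (N1 + k)"
      by (rule lyap[OF pt]) simp
    then show ?case using Suc by simp
  qed
  have n2: "N1 + k \<ge> 2" using N0(1) by (simp add: N1_def)
  have "aa (N1 + k) * phi pt (N1 + k - 1) \<le> abar * Mb pt"
  proof (intro mult_mono)
    show "aa (N1 + k) \<le> abar" using aa_b[of "N1 + k"] n2 by simp
    show "phi pt (N1 + k - 1) \<le> Mb pt" using phi_bound[OF pt] by (simp add: N1_def)
  qed (use abar0 phi_nonneg aa_b n2 in auto)
  then have "Gam pt (N1 + k) \<ge> - (abar * Mb pt)" using Gam_lower[OF n2, of pt] by linarith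
  then show ?thesis using tel[of k] by linarith
qed

end

context alg begin

definition p0 where "p0 = (SOME q. q \<in> zeros_sum A B)"
lemma p0: "p0 \<in> zeros_sum A B" using C1 unfolding p0_def by (simp add: some_in_eq)

lemma shifted_summable: "summable (\<lambda>j. dd (N1 + j))" "summable (\<lambda>j. SS (N1 + j))"
proof -
  have s: "summable (\<lambda>j. c0 * dd (N1 + j) + th * kap * SS (N1 + j))"
    by (rule nonneg_bounded_summable[OF _ sum_bound[OF p0]])
      (use c0_pos th_pos kap_pos dd_nonneg SS_nonneg in simp)
  have s1: "summable (\<lambda>j. (1 / c0) * (c0 * dd (N1 + j) + th * kap * SS (N1 + j)))"
    using s by (rule summable_mult)
  show "summable (\<lambda>j. dd (N1 + j))"
  proof (rule summable_comparison_test[OF _ s1])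
    show "\<exists>N. \<forall>n\<ge>N. norm (dd (N1 + n)) \<le> 1 / c0 * (c0 * dd (N1 + n) + th * kap * SS (N1 + n))"
    proof (intro exI allI impI)
      fix n
      have "th * kap * SS (N1 + n) \<ge> 0" using th_pos kap_pos SS_nonneg by simp
      then have "1 / c0 * (c0 * dd (N1 + n) + th * kap * SS (N1 + n)) \<ge> dd (N1 + n)"
        using c0_pos by (simp add: field_simps)
      then show "norm (dd (N1 + n)) \<le> 1 / c0 * (c0 * dd (N1 + n) + th * kap * SS (N1 + n))"
        using dd_nonneg by simp
    qed
  qed
  have s2: "summable (\<lambda>j. (1 / (th * kap)) * (c0 * dd (N1 + j) + th * kap * SS (N1 + j)))"
    using s by (rule summable_mult)
  show "summable (\<lambda>j. SS (N1 + j))"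
  proof (rule summable_comparison_test[OF _ s2])
    show "\<exists>N. \<forall>n\<ge>N. norm (SS (N1 + n)) \<le> 1 / (th * kap) * (c0 * dd (N1 + n) + th * kap * SS (N1 + n))"
    proof (intro exI allI impI)
      fix n
      have "c0 * dd (N1 + n) \<ge> 0" using c0_pos dd_nonneg by simp
      then have "1 / (th * kap) * (c0 * dd (N1 + n) + th * kap * SS (N1 + n)) \<ge> SS (N1 + n)"
        using th_pos kap_pos by (simp add: field_simps)
      then show "norm (SS (N1 + n)) \<le> 1 / (th * kap) * (c0 * dd (N1 + n) + th * kap * SS (N1 + n))"
        using SS_nonneg by simp
    qed
  qed
qed

lemma dd_lim: "dd \<longlonglongrightarrow> 0"
proof -
  have "(\<lambda>j. dd (j + N1)) \<longlonglongrightarrow> 0" using summable_LIMSEQ_zero[OF shifted_summable(1)] by (simp add: add.commute)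
  then show ?thesis by (rule LIMSEQ_offset)
qed

lemma SS_lim: "SS \<longlonglongrightarrow> 0"
proof -
  have "(\<lambda>j. SS (j + N1)) \<longlonglongrightarrow> 0" using summable_LIMSEQ_zero[OF shifted_summable(2)] by (simp add: add.commute)
  then show ?thesis by (rule LIMSEQ_offset)
qed

lemma x_bounded: "bounded (range x)"
proof -
  have u: "(UNIV::nat set) = {..<N0} \<union> {N0..}" by auto
  have r: "range x = x ` {..<N0} \<union> x ` {N0..}" by (metis image_Un u)
  have b1: "bounded (x ` {..<N0})" by (intro finite_imp_bounded) simp
  have "x ` {N0..} \<subseteq> cball p0 (sqrt (Mb p0))"
  proof
    fix v assume "v \<in> x ` {N0..}"
    then obtain n where n: "n \<ge> N0" "v = x n" by auto
    have "(norm (x n - p0))^2 \<le> Mb p0" using phi_bound[OF p0 n(1)] by (simp add: phi_def)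
    then have "norm (x n - p0) \<le> sqrt (Mb p0)" by (rule real_le_rsqrt)
    then show "v \<in> cball p0 (sqrt (Mb p0))" using n by (simp add: dist_norm norm_minus_commute)
  qed
  then have "bounded (x ` {N0..})" by (rule bounded_subset[OF bounded_cball])
  then show ?thesis unfolding r using b1 by simp
qed

lemma EE_bound: assumes n: "n \<ge> 1" shows "EE n \<le> 4 + 1 / th"
proof -
  note t = theta_b[OF n] and b = beta_b[OF n]
  have "(1 - theta n) * beta n * (1 + beta n) \<le> 1 * 1 * 2"
    using t b by (intro mult_mono) auto
  moreover have "rr n * beta n * (1 - beta n) \<le> rr n * 1 * 1"
    using t b rr_nonneg[OF n] by (intro mult_mono mult_nonneg_nonneg) auto
  moreover have "rr n \<le> 1 / th"
  proof -
    have "rr n \<le> 1 / theta n" using t by (simp add: rr_def divide_right_mono)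
    also have "\<dots> \<le> 1 / th" using t th_pos by (intro divide_left_mono) auto
    finally show ?thesis .
  qed
  moreover have "2 * theta n \<le> 2" using t by simp
  ultimately show ?thesis unfolding EE_def by linarith
qed

lemma phi_conv:
  assumes pt: "pt \<in> zeros_sum A B"
  shows "convergent (\<lambda>n. (norm (x n - pt))^2)"
proof -
  define Em where "Em = 4 + 1 / th"
  have "convergent (\<lambda>k. phi pt (N0 + k))"
  proof (rule inertial_conv[where al="\<lambda>k. aa (N1 + k)" and a=abar and e="\<lambda>k. Em * dd (N1 + k)"])
    fix k
    define n where "n = N1 + k"
    have nN0: "n \<ge> N0" and n1: "n \<ge> 1" using N0(1) by (auto simp: n_def N1_def)
    have e: "N0 + Suc (Suc k) = Suc n" "N0 + Suc k = n" "n - 1 = N0 + k" by (auto simp: n_def N1_def)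
    have mi: "phi pt (Suc n) - phi pt n - aa n * (phi pt n - phi pt (n - 1)) \<le> EE n * dd n - FF n * dd (Suc n) - theta n * kap * SS n"
      by (rule main_ineq[OF pt nN0])
    have "FF n * dd (Suc n) \<ge> 0" using FF_nonneg[OF n1] dd_nonneg by simp
    moreover have "theta n * kap * SS n \<ge> 0" using theta_b[OF n1] kap_pos SS_nonneg by simp
    moreover have "EE n * dd n \<le> Em * dd n" using EE_bound[OF n1] dd_nonneg by (simp add: Em_def mult_right_mono)
    ultimately have "phi pt (Suc n) - phi pt n \<le> aa n * (phi pt n - phi pt (n - 1)) + Em * dd n" using mi by linarith
    then show "phi pt (N0 + Suc (Suc k)) - phi pt (N0 + Suc k) \<le> aa (N1 + k) * (phi pt (N0 + Suc k) - phi pt (N0 + k)) + Em * dd (N1 + k)"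
      unfolding e by (simp add: n_def)
  next
    fix k show "0 \<le> aa (N1 + k)" "aa (N1 + k) \<le> abar" using aa_b[of "N1 + k"] N0(1) by (auto simp: N1_def)
  next
    show "abar < 1" by (rule abar_lt)
  next
    fix k show "0 \<le> Em * dd (N1 + k)" using th_pos dd_nonneg by (simp add: Em_def)
  next
    show "summable (\<lambda>k. Em * dd (N1 + k))" using shifted_summable(1) by (rule summable_mult)
  next
    fix k show "0 \<le> phi pt (N0 + k)" by (rule phi_nonneg)
  qed
  then obtain l where "(\<lambda>k. phi pt (k + N0)) \<longlonglongrightarrow> l" by (auto simp: convergent_def add.commute)
  then have "(\<lambda>n. phi pt n) \<longlonglongrightarrow> l" by (rule LIMSEQ_offset)
  then show ?thesis by (auto simp: convergent_def phi_def)
qed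

end

context alg begin

lemma norm_sqrt: "norm v = sqrt ((norm v)^2)" by simp

lemma g_lim: "(\<lambda>n. norm (w n - y n)) \<longlonglongrightarrow> 0"
proof -
  have "(\<lambda>n. sqrt (SS n)) \<longlonglongrightarrow> sqrt 0" by (intro tendsto_real_sqrt SS_lim)
  then show ?thesis by (simp add: SS_def)
qed

lemma d_lim: "(\<lambda>n. norm (x n - x (n - 1))) \<longlonglongrightarrow> 0"
proof -
  have "(\<lambda>n. sqrt (dd n)) \<longlonglongrightarrow> sqrt 0" by (intro tendsto_real_sqrt dd_lim)
  then show ?thesis by (simp add: dd_def)
qed

lemma demi:
  assumes S: "infinite S" and q: "\<forall>N. q \<in> closure (convex hull (x ` {n\<in>S. N \<le> n}))"
  shows "q \<in> zeros_sum A B"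
proof (rule zero_from_variational[OF C2_max lipA L0])
  fix a b assume b: "b \<in> B a"
  define v where "v = A a + b"
  obtain Rx where Rx: "\<And>n. norm (x n) \<le> Rx" using x_bounded by (auto simp: bounded_iff)
  define g where "g n = norm (w n - y n)" for n
  define d where "d n = norm (x n - x (n - 1))" for n
  define U where "U n = (1 / ell + L) * g n * (d n + g n + Rx + norm a) + norm v * (d n + g n)" for n
  have U0: "U \<longlonglongrightarrow> (1 / ell + L) * 0 * (0 + 0 + Rx + norm a) + norm v * (0 + 0)"
    unfolding U_def g_def d_def by (intro tendsto_intros g_lim d_lim)
  have key: "inner v (x n) \<le> inner v a + U n" if n: "n \<ge> 1" for n
  proof -
    obtain bb where bb: "bb \<in> B (y n)" "w n - lam n *\<^sub>R A (w n) = y n + lam n *\<^sub>R bb" using y_res[OF n] by blast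
    have lp: "lam n > 0" "lam n \<ge> ell" using lam_pos[OF n] lam_lower[OF n] by auto
    have mB: "inner (bb - b) (y n - a) \<ge> 0" using C2_max bb(1) b
      unfolding maximal_monotone_def monotone_setop_def by blast
    have mA: "inner (A (y n) - A a) (y n - a) \<ge> 0" using C2_mono unfolding monotone_op_def by blast
    have i1: "inner v (y n - a) \<le> inner (bb + A (y n)) (y n - a)"
      using mA mB by (simp add: v_def inner_diff_left inner_add_left)
    have bbeq: "bb + A (y n) = (1 / lam n) *\<^sub>R (w n - y n) - (A (w n) - A (y n))"
    proof -
      have "lam n *\<^sub>R bb = w n - y n - lam n *\<^sub>R A (w n)" using bb(2) by (simp add: algebra_simps)
      moreover have "bb = (1 / lam n) *\<^sub>R (lam n *\<^sub>R bb)" using lp(1) by simp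
      ultimately have "bb = (1 / lam n) *\<^sub>R (w n - y n - lam n *\<^sub>R A (w n))" by simp
      then show ?thesis using lp(1) by (simp add: algebra_simps)
    qed
    have nb: "norm (bb + A (y n)) \<le> (1 / ell + L) * g n"
    proof -
      have "norm (bb + A (y n)) \<le> norm ((1 / lam n) *\<^sub>R (w n - y n)) + norm (A (w n) - A (y n))"
        unfolding bbeq by (rule norm_triangle_ineq4)
      also have "norm ((1 / lam n) *\<^sub>R (w n - y n)) = g n / lam n" using lp by (simp add: g_def)
      also have "g n / lam n \<le> g n / ell" using lp ell_pos by (intro divide_left_mono) (auto simp: g_def)
      also have "norm (A (w n) - A (y n)) \<le> L * g n" using lipA by (simp add: g_def)
      finally show ?thesis by (simp add: algebra_simps)
    qed
    have nxw: "norm (x n - w n) \<le> d n"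
    proof -
      have "x n - w n = - (alpha n *\<^sub>R (x n - x (n - 1)))" using w_def[OF n] by simp
      then have "norm (x n - w n) = alpha n * d n" using alpha_b[OF n] by (simp add: d_def)
      also have "\<dots> \<le> 1 * d n" using alpha_b[OF n] by (intro mult_right_mono) (auto simp: d_def)
      finally show ?thesis by simp
    qed
    have nxy: "norm (x n - y n) \<le> d n + g n"
    proof -
      have "norm (x n - y n) \<le> norm (x n - w n) + norm (w n - y n)" using norm_triangle_ineq[of "x n - w n" "w n - y n"] by simp
      then show ?thesis using nxw by (simp add: g_def)
    qed
    have nya: "norm (y n - a) \<le> d n + g n + Rx + norm a"
    proof -
      have "y n - a = ((y n - x n) + x n) - a" by simp
      then have "norm (y n - a) \<le> norm ((y n - x n) + x n) + norm a"
        using norm_triangle_ineq4[of "(y n - x n) + x n" a] by simp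
      moreover have "norm ((y n - x n) + x n) \<le> norm (y n - x n) + norm (x n)" by (rule norm_triangle_ineq)
      ultimately have "norm (y n - a) \<le> norm (y n - x n) + norm (x n) + norm a" by linarith
      then show ?thesis using nxy Rx[of n] by (simp add: norm_minus_commute)
    qed
    have "inner (bb + A (y n)) (y n - a) \<le> norm (bb + A (y n)) * norm (y n - a)" by (rule norm_cauchy_schwarz)
    also have "\<dots> \<le> ((1 / ell + L) * g n) * (d n + g n + Rx + norm a)"
      using nb nya ell_pos L0 by (intro mult_mono) (auto simp: g_def)
    finally have t1: "inner (bb + A (y n)) (y n - a) \<le> (1 / ell + L) * g n * (d n + g n + Rx + norm a)" .
    have "inner v (x n - y n) \<le> norm v * norm (x n - y n)" by (rule norm_cauchy_schwarz)
    also have "\<dots> \<le> norm v * (d n + g n)" using nxy by (intro mult_left_mono) auto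
    finally have t2: "inner v (x n - y n) \<le> norm v * (d n + g n)" .
    have "inner v (x n) - inner v a = inner v (y n - a) + inner v (x n - y n)" by (simp add: inner_diff_right)
    then show ?thesis using i1 t1 t2 unfolding U_def by linarith
  qed
  have "inner v q \<le> inner v a"
  proof (rule hull_halfspace[OF _ q])
    fix e :: real assume e: "e > 0"
    have U0': "U \<longlonglongrightarrow> 0" using U0 by simp
    have "\<forall>\<^sub>F n in sequentially. U n < e" using order_tendstoD(2)[OF U0' e] .
    then obtain N where N: "\<And>n. n \<ge> N \<Longrightarrow> U n < e" by (auto simp: eventually_sequentially)
    show "\<exists>N. \<forall>n\<in>S. n \<ge> N \<longrightarrow> inner v (x n) \<le> inner v a + e"
    proof (intro exI[of _ "max N 1"] ballI impI)
      fix n assume "n \<in> S" "max N 1 \<le> n"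
      then have "n \<ge> 1" "n \<ge> N" by auto
      then show "inner v (x n) \<le> inner v a + e" using key[of n] N[of n] by linarith
    qed
  qed
  then show "inner (A a + b) (a - q) \<ge> 0" by (simp add: v_def inner_diff_right)
qed

theorem main: "\<exists>q\<in>zeros_sum A B. weak_conv x q"
  by (rule abstract_opial[OF x_bounded phi_conv demi])

end

theorem theorem3p1:
  fixes A :: "'a::{real_inner, complete_space} \<Rightarrow> 'a"
    and B :: "'a \<Rightarrow> 'a set"
    and L mu eps bet th :: real
    and alpha beta theta mun p lam :: "nat \<Rightarrow> real"
    and x w z y :: "nat \<Rightarrow> 'a"
  assumes C1: "zeros_sum A B \<noteq> {}"
    and C2_lip: "L-lipschitz_on UNIV A"
    and C2_mono: "monotone_op A"
    and C2_max: "maximal_monotone B"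
    and mu: "0 < mu" "mu < 1"
    and lam1: "lam 1 > 0"
    and mun_nonneg: "\<And>n. n \<ge> 1 \<Longrightarrow> mun n \<ge> 0"
    and p_nonneg: "\<And>n. n \<ge> 1 \<Longrightarrow> p n \<ge> 0"
    and eps: "eps > 1"
    and C3_i: "\<And>n. n \<ge> 1 \<Longrightarrow> 0 \<le> alpha n \<and> alpha n \<le> 1"
    and C3_ii: "\<And>n. n \<ge> 1 \<Longrightarrow> 0 \<le> beta n \<and> beta n \<le> beta (Suc n) \<and> beta (Suc n) \<le> bet"
    and C3_ii_bet: "bet < (3 + 2 * eps - sqrt (8 * eps + 17)) / (2 * eps)"
    and C3_iii: "\<And>n. n \<ge> 1 \<Longrightarrow> 0 < th \<and> th < theta n \<and> theta n \<le> theta (Suc n)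
                      \<and> theta (Suc n) \<le> 1 / (1 + eps)"
    and C3_iv: "\<And>n. n \<ge> 1 \<Longrightarrow>
        (1 - theta n) * beta n + theta n * alpha n
          \<le> (1 - theta (Suc n)) * beta (Suc n) + theta (Suc n) * alpha (Suc n)"
    and C3_v: "summable (\<lambda>n. p (Suc n))" "mun \<longlonglongrightarrow> 0"
    and w_def: "\<And>n. n \<ge> 1 \<Longrightarrow> w n = x n + alpha n *\<^sub>R (x n - x (n - 1))"
    and z_def: "\<And>n. n \<ge> 1 \<Longrightarrow> z n = x n + beta n *\<^sub>R (x n - x (n - 1))"
    and y_def: "\<And>n. n \<ge> 1 \<Longrightarrow> y n = resolvent B (lam n) (w n - lam n *\<^sub>R A (w n))"
    and lam_def: "\<And>n. n \<ge> 1 \<Longrightarrow> lam (Suc n) =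
        (if A (w n) \<noteq> A (y n)
         then min ((mun n + mu) * norm (w n - y n) / norm (A (w n) - A (y n))) (lam n + p n)
         else lam n + p n)"
    and nostop: "\<And>n. n \<ge> 1 \<Longrightarrow> w n \<noteq> y n"
    and x_def: "\<And>n. n \<ge> 1 \<Longrightarrow> x (Suc n) =
        (1 - theta n) *\<^sub>R z n + theta n *\<^sub>R (y n - lam n *\<^sub>R (A (y n) - A (w n)))"
  shows "\<exists>q\<in>zeros_sum A B. weak_conv x q"
  proof -
  interpret alg A B L mu eps bet th alpha beta theta mun p lam x w z y
    by (rule alg.intro[OF assms])
  show ?thesis by (rule main)
qed

end
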